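(* Let $T\ge 2$, $J=\lceil\sqrt{T}\rceil$, and $b^j=(j-1)/\sqrt{T}$ for $j\in\{1,\dots,J\}$. Let $G$ be a CDF on $[0,1]$, and define the bins $I_1=\{0\}$ and $I_j=(b^{j-1},b^j]$ for $2\le j\le J$, so that $G(b^j)=\sum_{i\le j}\mathbb{P}_{m\sim G}(m\in I_i)$. Let $\Phi$ be a finite index set, and for $\tau\in\Phi$ let $b_\tau\in[0,1]$ be bids and $m_\tau$ HOBs such that, conditionally on $(b_\tau)_{\tau\in\Phi}$ (and the contexts), the $m_\tau$, $\tau\in\Phi$, are mutually independent with CDF $G$. Independently, let $m'_1,\dots,m'_{T_0}$ be i.i.d. with CDF $G$, where $T_0\ge\lceil\sqrt{T}\rceil$, and set $\widehat p_0^k=\frac{1}{T_0}\sum_{s=1}^{T_0}\mathbb{1}[m'_s\in I_k]$. For each $j$ let $n^j=\sum_{\tau\in\Phi}\mathbb{1}[b_\tau\ge b^j]$, \[ \widehat p^j=\frac{\sum_{\tau\in\Phi}\mathbb{1}[b_\tau\ge b^j]\,\mathbb{1}[m_\tau\in I_j]}{n^j},\qquad \widehat G(b^j)=\sum_{i\le j}\widehat p^i, \] \[ u(b^j)=8\sqrt{\sum_{k\le j}\frac{2\log T}{n^k}\left(\widehat p_0^k+\frac{12\log T}{\sqrt T}\right)}+\frac{8\log T}{n^j}, \] with the conventions $\widehat p^j=0$ if $n^j=0$ and $u(b^j)=+\infty$ if $n^k=0$ for some $k\le j$. Then with probability at least $1-T^{-3}$, simultaneously for every $j\in\{1,\dots,J\}$,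 \[ \left|G(b^j)-\widehat G(b^j)\right|\le u(b^j)\quad\text{and}\quad \frac{1}{\sqrt T}\left|\sum_{i\le j}\left(G(b^i)-\widehat G(b^i)\right)\right|\le u(b^j). \]
   Context: Here $m_\tau$ plays the role of the highest competing bid in a second-price auction; the bidder only observes $\mathbb{1}[b_\tau\ge m_\tau]\,m_\tau$ (the payment when she wins), which suffices to compute $\widehat p^j$ since $\mathbb{1}[b_\tau\ge b^j]\mathbb{1}[m_\tau\in I_j]$ is determined by it. *)

theory Defs
  imports "HOL-Probability.Probability"
begin

definition Jnum :: "nat \<Rightarrow> nat" where
  "Jnum T = nat \<lceil>sqrt (real T)\<rceil>"

definition bgrid :: "nat \<Rightarrow> nat \<Rightarrow> real" where
  "bgrid T j = (real j - 1) / sqrt (real T)"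

definition bin :: "nat \<Rightarrow> nat \<Rightarrow> real set" where
  "bin T j = (if j = 1 then {0} else {bgrid T (j - 1)<..bgrid T j})"

definition ncount :: "nat \<Rightarrow> 'i set \<Rightarrow> ('i \<Rightarrow> real) \<Rightarrow> nat \<Rightarrow> nat" where
  "ncount T \<Phi> bid j = card {\<tau>\<in>\<Phi>. bid \<tau> \<ge> bgrid T j}"

definition phat :: "nat \<Rightarrow> 'i set \<Rightarrow> ('i \<Rightarrow> real) \<Rightarrow> ('i \<Rightarrow> real) \<Rightarrow> nat \<Rightarrow> real" where
  "phat T \<Phi> bid hob j =
     (if ncount T \<Phi> bid j = 0 then 0
      else (\<Sum>\<tau>\<in>\<Phi>. (if bid \<tau> \<ge> bgrid T j \<and> hob \<tau> \<in> bin T j then 1 else 0))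
           / real (ncount T \<Phi> bid j))"

definition Ghat :: "nat \<Rightarrow> 'i set \<Rightarrow> ('i \<Rightarrow> real) \<Rightarrow> ('i \<Rightarrow> real) \<Rightarrow> nat \<Rightarrow> real" where
  "Ghat T \<Phi> bid hob j = (\<Sum>i=1..j. phat T \<Phi> bid hob i)"

definition phat0 :: "nat \<Rightarrow> nat \<Rightarrow> (nat \<Rightarrow> real) \<Rightarrow> nat \<Rightarrow> real" where
  "phat0 T T0 hob' k = (1 / real T0) * (\<Sum>s=1..T0. indicator (bin T k) (hob' s))"

definition ubound :: "nat \<Rightarrow> nat \<Rightarrow> 'i set \<Rightarrow> ('i \<Rightarrow> real) \<Rightarrow> (nat \<Rightarrow> real) \<Rightarrow> nat \<Rightarrow> ereal" where
  "ubound T T0 \<Phi> bid hob' j =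
     (if \<exists>k\<in>{1..j}. ncount T \<Phi> bid k = 0 then \<infinity>
      else ereal (8 * sqrt (\<Sum>k=1..j. 2 * ln (real T) / real (ncount T \<Phi> bid k)
                              * (phat0 T T0 hob' k + 12 * ln (real T) / sqrt (real T)))
                 + 8 * ln (real T) / real (ncount T \<Phi> bid j)))"

end

theory Submission
  imports Defs
begin

lemma exp_bound32:
  fixes z :: real assumes "z \<le> 3/2" shows "exp z \<le> 1 + z + z\<^sup>2"
proof (cases "z \<ge> 0")
  case True
  have "suminf (\<lambda>n. inverse(fact (n+2)) * (z ^ (n + 2))) \<le> z\<^sup>2"
  proof -
    have "(\<lambda>n. z\<^sup>2 / 2 * (1/2) ^ n) sums (z\<^sup>2 / 2 * (1 / (1 - 1/2)))"
      by (intro sums_mult geometric_sums) simp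
    then have sumsx: "(\<lambda>n. z\<^sup>2 / 2 * (1/2) ^ n) sums z\<^sup>2"
      by simp
    have "suminf (\<lambda>n. inverse(fact (n+2)) * (z ^ (n + 2))) \<le> suminf (\<lambda>n. (z\<^sup>2/2) * ((1/2)^n))"
    proof (intro suminf_le allI)
      show "inverse (fact (n + 2)) * z ^ (n + 2) \<le> (z\<^sup>2/2) * ((1/2)^n)" for n :: nat
      proof -
        have "(2::nat) * 3 ^ n \<le> fact (n + 2)"
          by (induct n) simp_all
        then have "real ((2::nat) * 3 ^ n) \<le> real_of_nat (fact (n + 2))"
          by (simp only: of_nat_le_iff)
        then have f: "((2::real) * 3 ^ n) \<le> fact (n + 2)"
          unfolding of_nat_fact by simp
        have zn: "z ^ n \<le> (3/2) ^ n" using True assms by (intro power_mono) auto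
        have "inverse (fact (n + 2)) * z ^ (n + 2) = z^n * z\<^sup>2 / fact (n+2)"
          by (simp add: power_add divide_inverse mult.commute power2_eq_square)
        also have "\<dots> \<le> (3/2)^n * z\<^sup>2 / ((2::real) * 3 ^ n)"
          using f zn True by (intro frac_le mult_mono) auto
        also have "\<dots> = (z\<^sup>2/2) * ((1/2)^n)"
          by (simp add: power_divide field_simps)
        finally show ?thesis .
      qed
      show "summable (\<lambda>n. inverse (fact (n + 2)) * z ^ (n + 2))"
        by (rule summable_exp [THEN summable_ignore_initial_segment])
      show "summable (\<lambda>n. z\<^sup>2 / 2 * (1/2) ^ n)"
        by (rule sums_summable [OF sumsx])
    qed
    also have "\<dots> = z\<^sup>2"
      by (rule sums_unique [THEN sym]) (rule sumsx)
    finally show ?thesis .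
  qed
  then show ?thesis
    unfolding exp_first_two_terms by auto
next
  case False
  obtain t where "exp z = (\<Sum>m<3. (z ^ m) / fact m) + (exp t / fact 3) * z ^ 3"
    using Maclaurin_exp_le[of z 3] by blast
  moreover have "(exp t / fact 3) * z ^ 3 \<le> 0"
    using False by (intro mult_nonneg_nonpos) (auto simp: power_odd_eq)
  moreover have "(\<Sum>m<3. (z ^ m) / fact m) = 1 + z + z\<^sup>2/2"
    by (simp add: numeral_3_eq_3 power2_eq_square)
  ultimately have "exp z \<le> 1 + z + z\<^sup>2/2" by linarith
  moreover have "z\<^sup>2 \<ge> 0" by simp
  ultimately show ?thesis by linarith
qed

lemma mgf1:
  fixes \<pi> y :: "'l \<Rightarrow> real"
  assumes "finite L" "\<And>l. l \<in> L \<Longrightarrow> \<pi> l \<ge> 0" "(\<Sum>l\<in>L. \<pi> l) = 1"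
    "(\<Sum>l\<in>L. \<pi> l * y l) = 0" "\<And>l. l \<in> L \<Longrightarrow> lam * y l \<le> 3/2"
  shows "(\<Sum>l\<in>L. \<pi> l * exp (lam * y l)) \<le> exp (lam\<^sup>2 * (\<Sum>l\<in>L. \<pi> l * (y l)\<^sup>2))"
proof -
  have "(\<Sum>l\<in>L. \<pi> l * exp (lam * y l)) \<le> (\<Sum>l\<in>L. \<pi> l * (1 + lam * y l + (lam * y l)\<^sup>2))"
    using assms by (intro sum_mono mult_left_mono exp_bound32) auto
  also have "\<dots> = (\<Sum>l\<in>L. \<pi> l) + lam * (\<Sum>l\<in>L. \<pi> l * y l) + lam\<^sup>2 * (\<Sum>l\<in>L. \<pi> l * (y l)\<^sup>2)"
    by (simp add: sum.distrib sum_distrib_left algebra_simps power2_eq_square)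
  also have "\<dots> = 1 + lam\<^sup>2 * (\<Sum>l\<in>L. \<pi> l * (y l)\<^sup>2)" using assms by simp
  also have "\<dots> \<le> exp (lam\<^sup>2 * (\<Sum>l\<in>L. \<pi> l * (y l)\<^sup>2))" by (rule exp_ge_add_one_self)
  finally show ?thesis .
qed

lemma tail_opt:
  fixes P t V x Lam :: real
  assumes "\<And>lam. 0 \<le> lam \<Longrightarrow> lam \<le> Lam \<Longrightarrow> P \<le> exp (- lam * t + lam\<^sup>2 * V)"
    "Lam > 0" "V \<ge> 0" "x \<ge> 0" "t \<ge> 2 * sqrt (V * x) + x / Lam"
  shows "P \<le> exp (- x)"
proof (cases "x = 0")
  case True
  then show ?thesis using assms(1)[of 0] assms(2) by simp
next
  case False
  then have xp: "x > 0" using assms by auto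
  define s where "s = sqrt (V * x)"
  define d where "d = x / Lam"
  have s0: "s \<ge> 0" and d0: "d > 0" using assms xp by (auto simp: s_def d_def)
  have ss: "s\<^sup>2 = V * x" using assms by (simp add: s_def)
  define lam where "lam = x / (s + d)"
  have l0: "lam \<ge> 0" using s0 d0 xp by (simp add: lam_def)
  have "lam \<le> x / d" unfolding lam_def using s0 d0 xp by (intro divide_left_mono) auto
  moreover have "x / d = Lam" using xp assms(2) by (simp add: d_def)
  ultimately have lL: "lam \<le> Lam" by simp
  have "- lam * t + lam\<^sup>2 * V \<le> - lam * (2 * s + d) + lam\<^sup>2 * V"
    using l0 assms(5) by (simp add: s_def d_def mult_left_mono)
  also have "\<dots> = - x * (s\<^sup>2 + 3 * s * d + d\<^sup>2) / (s + d)\<^sup>2"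
  proof -
    have "lam\<^sup>2 * V = x * s\<^sup>2 / (s+d)\<^sup>2"
      using xp ss by (simp add: lam_def power2_eq_square field_simps)
    moreover have "lam * (2 * s + d) = x * (2 * s + d) / (s + d)" by (simp add: lam_def)
    moreover have "x * (2 * s + d) / (s + d) = x * (2 * s + d) * (s + d) / (s + d)\<^sup>2"
      using s0 d0 by (simp add: power2_eq_square)
    ultimately have "- lam * (2 * s + d) + lam\<^sup>2 * V = (x * s\<^sup>2 - x * (2 * s + d) * (s + d)) / (s + d)\<^sup>2"
      by (simp add: diff_divide_distrib)
    also have "\<dots> = - x * (s\<^sup>2 + 3 * s * d + d\<^sup>2) / (s + d)\<^sup>2"
      by (simp add: algebra_simps power2_eq_square)
    finally show ?thesis .
  qed
  also have "\<dots> \<le> - x"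
  proof -
    have "(s + d)\<^sup>2 \<le> s\<^sup>2 + 3 * s * d + d\<^sup>2" using s0 d0 by (simp add: power2_eq_square algebra_simps)
    then have "x * (s + d)\<^sup>2 \<le> x * (s\<^sup>2 + 3 * s * d + d\<^sup>2)" using xp by simp
    then show ?thesis using s0 d0 by (simp add: field_simps)
  qed
  finally show ?thesis using assms(1)[OF l0 lL] by (meson exp_le_cancel_iff order_trans)
qed

lemma chernoff_fin:
  fixes \<pi> :: "'l \<Rightarrow> real" and y :: "'j \<Rightarrow> 'l \<Rightarrow> real"
  assumes "finite I" "finite L" "\<And>l. l \<in> L \<Longrightarrow> \<pi> l \<ge> 0" "lam \<ge> 0"
  shows "(\<Sum>\<phi>\<in>PiE I (\<lambda>_. L). if t \<le> (\<Sum>i\<in>I. y i (\<phi> i)) then (\<Prod>i\<in>I. \<pi> (\<phi> i)) else 0)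
         \<le> exp (- lam * t) * (\<Prod>i\<in>I. \<Sum>l\<in>L. \<pi> l * exp (lam * y i l))"
proof -
  have "(\<Sum>\<phi>\<in>PiE I (\<lambda>_. L). if t \<le> (\<Sum>i\<in>I. y i (\<phi> i)) then (\<Prod>i\<in>I. \<pi> (\<phi> i)) else 0)
     \<le> (\<Sum>\<phi>\<in>PiE I (\<lambda>_. L). (\<Prod>i\<in>I. \<pi> (\<phi> i)) * exp (lam * ((\<Sum>i\<in>I. y i (\<phi> i)) - t)))"
  proof (intro sum_mono)
    fix \<phi> assume \<phi>: "\<phi> \<in> PiE I (\<lambda>_. L)"
    have p0: "(\<Prod>i\<in>I. \<pi> (\<phi> i)) \<ge> 0" using \<phi> assms by (intro prod_nonneg) (auto simp: PiE_def)
    show "(if t \<le> (\<Sum>i\<in>I. y i (\<phi> i)) then (\<Prod>i\<in>I. \<pi> (\<phi> i)) else 0)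
       \<le> (\<Prod>i\<in>I. \<pi> (\<phi> i)) * exp (lam * ((\<Sum>i\<in>I. y i (\<phi> i)) - t))"
    proof (cases "t \<le> (\<Sum>i\<in>I. y i (\<phi> i))")
      case True
      then have "1 \<le> exp (lam * ((\<Sum>i\<in>I. y i (\<phi> i)) - t))" using assms(4) by simp
      then show ?thesis using True p0 by (simp add: mult_le_cancel_left1)
    next
      case False then show ?thesis using p0 by simp
    qed
  qed
  also have "\<dots> = (\<Sum>\<phi>\<in>PiE I (\<lambda>_. L). exp (- lam * t) * (\<Prod>i\<in>I. \<pi> (\<phi> i) * exp (lam * y i (\<phi> i))))"
  proof (intro sum.cong refl)
    fix \<phi>
    have "exp (lam * ((\<Sum>i\<in>I. y i (\<phi> i)) - t)) = exp (- lam * t) * exp (\<Sum>i\<in>I. lam * y i (\<phi> i))"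
      by (simp add: sum_distrib_left right_diff_distrib exp_diff exp_minus field_simps)
    also have "\<dots> = exp (- lam * t) * (\<Prod>i\<in>I. exp (lam * y i (\<phi> i)))"
      using assms(1) by (simp add: exp_sum)
    finally show "(\<Prod>i\<in>I. \<pi> (\<phi> i)) * exp (lam * ((\<Sum>i\<in>I. y i (\<phi> i)) - t)) =
         exp (- lam * t) * (\<Prod>i\<in>I. \<pi> (\<phi> i) * exp (lam * y i (\<phi> i)))"
      by (simp add: prod.distrib)
  qed
  also have "\<dots> = exp (- lam * t) * (\<Prod>i\<in>I. \<Sum>l\<in>L. \<pi> l * exp (lam * y i l))"
    using prod_sum_PiE[of I "\<lambda>_. L" "\<lambda>i l. \<pi> l * exp (lam * y i l)"] assms(1,2)
    by (simp add: sum_distrib_left)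
  finally show ?thesis .
qed

lemma chernoff_full:
  fixes \<pi> :: "'l \<Rightarrow> real" and w :: "'j \<Rightarrow> 'l \<Rightarrow> real"
  assumes I: "finite I" and L: "finite L" and pi0: "\<And>l. l \<in> L \<Longrightarrow> \<pi> l \<ge> 0"
    and pi1: "(\<Sum>l\<in>L. \<pi> l) = 1"
    and B: "B > 0" and w: "\<And>i l. i \<in> I \<Longrightarrow> l \<in> L \<Longrightarrow> 0 \<le> w i l \<and> w i l \<le> B"
    and sg: "\<sigma> = 1 \<or> \<sigma> = -1"
    and V: "(\<Sum>i\<in>I. \<Sum>l\<in>L. \<pi> l * (w i l)\<^sup>2) \<le> V"
    and x: "x \<ge> 0" and t: "t \<ge> 2 * sqrt (V * x) + 2 * B * x / 3"
  shows "(\<Sum>\<phi>\<in>PiE I (\<lambda>_. L). if t \<le> (\<Sum>i\<in>I. \<sigma> * (w i (\<phi> i) - (\<Sum>l\<in>L. \<pi> l * w i l)))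
            then (\<Prod>i\<in>I. \<pi> (\<phi> i)) else 0) \<le> exp (- x)"
proof (rule tail_opt)
  define \<mu> where "\<mu> i = (\<Sum>l\<in>L. \<pi> l * w i l)" for i
  have mu: "0 \<le> \<mu> i \<and> \<mu> i \<le> B" if "i \<in> I" for i
  proof -
    have "\<mu> i \<le> (\<Sum>l\<in>L. \<pi> l * B)" unfolding \<mu>_def
      using w that pi0 by (intro sum_mono mult_left_mono) auto
    also have "\<dots> = B" using pi1 by (simp add: sum_distrib_right[symmetric])
    finally show ?thesis using w that pi0 by (auto simp: \<mu>_def intro!: sum_nonneg)
  qed
  have V0: "0 \<le> (\<Sum>i\<in>I. \<Sum>l\<in>L. \<pi> l * (w i l)\<^sup>2)" using pi0 by (intro sum_nonneg) auto
  show "V \<ge> 0" using V V0 by linarith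
  show "3 / (2 * B) > 0" using B by simp
  show "x \<ge> 0" by fact
  show "t \<ge> 2 * sqrt (V * x) + x / (3 / (2 * B))" using t by (simp add: mult.commute)
  fix lam :: real assume l0: "0 \<le> lam" and lL: "lam \<le> 3 / (2 * B)"
  have one: "(\<Sum>l\<in>L. \<pi> l * exp (lam * (\<sigma> * (w i l - \<mu> i)))) \<le> exp (lam\<^sup>2 * (\<Sum>l\<in>L. \<pi> l * (w i l)\<^sup>2))"
    if i: "i \<in> I" for i
  proof -
    have "(\<Sum>l\<in>L. \<pi> l * exp (lam * (\<sigma> * (w i l - \<mu> i)))) \<le> exp (lam\<^sup>2 * (\<Sum>l\<in>L. \<pi> l * (\<sigma> * (w i l - \<mu> i))\<^sup>2))"
    proof (rule mgf1[OF L pi0 pi1])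
      show "(\<Sum>l\<in>L. \<pi> l * (\<sigma> * (w i l - \<mu> i))) = 0"
        using pi1 by (simp add: algebra_simps sum_subtractf sum_distrib_left[symmetric] sum_distrib_right[symmetric] \<mu>_def)
      fix l assume l: "l \<in> L"
      have "\<sigma> * (w i l - \<mu> i) \<le> B" using sg w[OF i l] mu[OF i] by auto
      then have "lam * (\<sigma> * (w i l - \<mu> i)) \<le> lam * B" using l0 by (rule mult_left_mono)
      also have "\<dots> \<le> 3 / (2 * B) * B" using lL B by (intro mult_right_mono) auto
      finally show "lam * (\<sigma> * (w i l - \<mu> i)) \<le> 3/2" using B by simp
    qed (auto)
    also have "\<dots> \<le> exp (lam\<^sup>2 * (\<Sum>l\<in>L. \<pi> l * (w i l)\<^sup>2))"
    proof -
      have "(\<Sum>l\<in>L. \<pi> l * (\<sigma> * (w i l - \<mu> i))\<^sup>2) = (\<Sum>l\<in>L. \<pi> l * (w i l)\<^sup>2) - (\<mu> i)\<^sup>2"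
      proof -
        have sq: "(\<sigma> * (w i l - \<mu> i))\<^sup>2 = (w i l)\<^sup>2 - 2 * \<mu> i * w i l + (\<mu> i)\<^sup>2" for l
          using sg by (auto simp: power2_eq_square algebra_simps)
        have "(\<Sum>l\<in>L. \<pi> l * (\<sigma> * (w i l - \<mu> i))\<^sup>2) =
              (\<Sum>l\<in>L. \<pi> l * (w i l)\<^sup>2) - 2 * \<mu> i * (\<Sum>l\<in>L. \<pi> l * w i l) + (\<mu> i)\<^sup>2 * (\<Sum>l\<in>L. \<pi> l)"
        proof -
          have "(\<Sum>l\<in>L. \<pi> l * (\<sigma> * (w i l - \<mu> i))\<^sup>2) = (\<Sum>l\<in>L. \<pi> l * ((w i l)\<^sup>2 - 2 * \<mu> i * w i l + (\<mu> i)\<^sup>2))"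
            by (simp only: sq)
          also have "\<dots> = (\<Sum>l\<in>L. \<pi> l * (w i l)\<^sup>2 - 2 * \<mu> i * (\<pi> l * w i l) + (\<mu> i)\<^sup>2 * \<pi> l)"
            by (intro sum.cong) (auto simp: algebra_simps)
          also have "\<dots> = (\<Sum>l\<in>L. \<pi> l * (w i l)\<^sup>2) - 2 * \<mu> i * (\<Sum>l\<in>L. \<pi> l * w i l) + (\<mu> i)\<^sup>2 * (\<Sum>l\<in>L. \<pi> l)"
            by (simp add: sum.distrib sum_subtractf sum_distrib_left)
          finally show ?thesis .
        qed
        then show ?thesis using pi1 by (simp add: \<mu>_def power2_eq_square)
      qed
      then show ?thesis by (simp add: mult_left_mono)
    qed
    finally show ?thesis .
  qed
  have "(\<Sum>\<phi>\<in>PiE I (\<lambda>_. L). if t \<le> (\<Sum>i\<in>I. \<sigma> * (w i (\<phi> i) - \<mu> i)) then (\<Prod>i\<in>I. \<pi> (\<phi> i)) else 0)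
        \<le> exp (- lam * t) * (\<Prod>i\<in>I. \<Sum>l\<in>L. \<pi> l * exp (lam * (\<sigma> * (w i l - \<mu> i))))"
    by (rule chernoff_fin[OF I L pi0 l0])
  also have "\<dots> \<le> exp (- lam * t) * (\<Prod>i\<in>I. exp (lam\<^sup>2 * (\<Sum>l\<in>L. \<pi> l * (w i l)\<^sup>2)))"
    using one pi0 by (intro mult_left_mono prod_mono conjI sum_nonneg) (auto intro!: mult_nonneg_nonneg)
  also have "\<dots> = exp (- lam * t) * exp (lam\<^sup>2 * (\<Sum>i\<in>I. \<Sum>l\<in>L. \<pi> l * (w i l)\<^sup>2))"
    using I by (simp add: exp_sum sum_distrib_left)
  also have "\<dots> \<le> exp (- lam * t) * exp (lam\<^sup>2 * V)"
    using V by (intro mult_left_mono) (auto intro!: mult_left_mono)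
  also have "\<dots> = exp (- lam * t + lam\<^sup>2 * V)" by (simp only: exp_add[symmetric])
  finally show "(\<Sum>\<phi>\<in>PiE I (\<lambda>_. L). if t \<le> (\<Sum>i\<in>I. \<sigma> * (w i (\<phi> i) - (\<Sum>l\<in>L. \<pi> l * w i l)))
            then (\<Prod>i\<in>I. \<pi> (\<phi> i)) else 0) \<le> exp (- lam * t + lam\<^sup>2 * V)" by (simp add: \<mu>_def)
qed

lemma sets_Collect_Ball_finite:
  assumes "finite I" "\<And>i. i \<in> I \<Longrightarrow> {x\<in>space M. P i x} \<in> sets M"
  shows "{x\<in>space M. \<forall>i\<in>I. P i x} \<in> sets M"
  using assms by (intro sets.sets_Collect_countable_All') (auto intro: countable_finite)

lemma gl:
  fixes M :: "'a measure" and D :: "real measure" and X :: "'j \<Rightarrow> 'a \<Rightarrow> real" and lab :: "real \<Rightarrow> 'l"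
  assumes P: "prob_space M" and I: "finite I" and L: "finite L" and E: "E \<in> sets M"
    and X: "\<And>i. i \<in> I \<Longrightarrow> X i \<in> borel_measurable M"
    and lm: "\<And>l. lab -` {l} \<in> sets borel" and lr: "\<And>y. lab y \<in> L"
    and rect: "\<And>A. (\<forall>i\<in>I. A i \<in> sets borel) \<Longrightarrow>
       measure M {\<omega>\<in>space M. \<omega> \<in> E \<and> (\<forall>i\<in>I. X i \<omega> \<in> A i)} = measure M E * (\<Prod>i\<in>I. measure D (A i))"
  shows "measure M {\<omega>\<in>space M. \<omega> \<in> E \<and> Q (\<lambda>i\<in>I. lab (X i \<omega>))}
       = measure M E * (\<Sum>\<phi>\<in>PiE I (\<lambda>_. L). if Q \<phi> then (\<Prod>i\<in>I. measure D (lab -` {\<phi> i})) else 0)"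
proof -
  interpret prob_space M by fact
  define R where "R \<phi> = {\<omega>\<in>space M. \<omega> \<in> E \<and> (\<forall>i\<in>I. X i \<omega> \<in> lab -` {\<phi> i})}" for \<phi>
  define S where "S = {\<phi>\<in>PiE I (\<lambda>_. L). Q \<phi>}"
  have fS: "finite S" unfolding S_def using I L by (intro finite_subset[OF _ finite_PiE[of I "\<lambda>_. L"]]) auto
  have Rm: "R \<phi> \<in> sets M" for \<phi>
  proof -
    have "R \<phi> = E \<inter> {\<omega>\<in>space M. \<forall>i\<in>I. X i \<omega> \<in> lab -` {\<phi> i}}" unfolding R_def by auto
    moreover have "{\<omega>\<in>space M. \<forall>i\<in>I. X i \<omega> \<in> lab -` {\<phi> i}} \<in> sets M"
    proof (rule sets_Collect_Ball_finite[OF I])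
      fix i assume i: "i \<in> I"
      have "{x \<in> space M. X i x \<in> lab -` {\<phi> i}} = X i -` (lab -` {\<phi> i}) \<inter> space M" by auto
      then show "{x \<in> space M. X i x \<in> lab -` {\<phi> i}} \<in> sets M"
        using measurable_sets[OF X[OF i] lm] by simp
    qed
    ultimately show ?thesis using E by auto
  qed
  have eq: "{\<omega>\<in>space M. \<omega> \<in> E \<and> Q (\<lambda>i\<in>I. lab (X i \<omega>))} = (\<Union>\<phi>\<in>S. R \<phi>)"
  proof (intro equalityI subsetI)
    fix \<omega> assume \<omega>: "\<omega> \<in> {\<omega>\<in>space M. \<omega> \<in> E \<and> Q (\<lambda>i\<in>I. lab (X i \<omega>))}"
    then have "(\<lambda>i\<in>I. lab (X i \<omega>)) \<in> S" "\<omega> \<in> R (\<lambda>i\<in>I. lab (X i \<omega>))"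
      using lr by (auto simp: S_def R_def)
    then show "\<omega> \<in> (\<Union>\<phi>\<in>S. R \<phi>)" by blast
  next
    fix \<omega> assume "\<omega> \<in> (\<Union>\<phi>\<in>S. R \<phi>)"
    then obtain \<phi> where \<phi>: "\<phi> \<in> S" "\<omega> \<in> R \<phi>" by blast
    then have "(\<lambda>i\<in>I. lab (X i \<omega>)) = \<phi>"
      by (intro ext) (auto simp: S_def R_def PiE_def extensional_def)
    then show "\<omega> \<in> {\<omega>\<in>space M. \<omega> \<in> E \<and> Q (\<lambda>i\<in>I. lab (X i \<omega>))}"
      using \<phi> by (auto simp: S_def R_def)
  qed
  have disj: "disjoint_family_on R S"
  unfolding disjoint_family_on_def
  proof (intro ballI impI)
    fix \<phi> \<psi> assume "\<phi> \<in> S" "\<psi> \<in> S" "\<phi> \<noteq> \<psi>"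
    then obtain i where i: "i \<in> I" "\<phi> i \<noteq> \<psi> i"
      by (auto simp: S_def PiE_def extensional_def fun_eq_iff) (metis)
    then show "R \<phi> \<inter> R \<psi> = {}" by (auto simp: R_def)
  qed
  have "measure M (\<Union>\<phi>\<in>S. R \<phi>) = (\<Sum>\<phi>\<in>S. measure M (R \<phi>))"
    using fS Rm disj by (intro finite_measure_finite_Union) auto
  also have "\<dots> = (\<Sum>\<phi>\<in>S. measure M E * (\<Prod>i\<in>I. measure D (lab -` {\<phi> i})))"
    unfolding R_def using lm by (intro sum.cong refl rect) auto
  also have "\<dots> = measure M E * (\<Sum>\<phi>\<in>PiE I (\<lambda>_. L). if Q \<phi> then (\<Prod>i\<in>I. measure D (lab -` {\<phi> i})) else 0)"
    unfolding S_def using I L by (simp add: sum.inter_filter finite_PiE sum_distrib_left[symmetric])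
  finally show ?thesis using eq by simp
qed

locale setting =
  fixes T :: nat and D :: "real measure"
  assumes T2: "T \<ge> 2" and rd: "real_distribution D" and D01: "emeasure D {0..1} = 1"
begin

interpretation D: real_distribution D by (rule rd)

abbreviation "J \<equiv> Jnum T"

definition lab :: "real \<Rightarrow> nat" where
  "lab y = (if \<exists>i\<in>{1..J}. y \<in> bin T i then (THE i. i \<in> {1..J} \<and> y \<in> bin T i) else 0)"

definition pi :: "nat \<Rightarrow> real" where
  "pi l = measure D (lab -` {l})"

lemma sqrtT_pos: "sqrt (real T) > 0" using T2 by simp

lemma bgrid_less: "i < i' \<Longrightarrow> bgrid T i < bgrid T i'"
  using sqrtT_pos by (simp add: bgrid_def divide_strict_right_mono)

lemma bgrid_le: "i \<le> i' \<Longrightarrow> bgrid T i \<le> bgrid T i'"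
  using bgrid_less by (cases "i = i'") (auto simp: order.order_iff_strict)

lemma bgrid_1: "bgrid T 1 = 0" by (simp add: bgrid_def)

lemma bin_disj:
  assumes "i \<ge> 1" "i' \<ge> 1" "y \<in> bin T i" "y \<in> bin T i'" shows "i = i'"
proof (rule ccontr)
  assume ne: "i \<noteq> i'"
  have key: "False" if a: "a < a'" "a \<ge> 1" "y \<in> bin T a" "y \<in> bin T a'" for a a'
  proof -
    have "a' \<noteq> 1" using a by auto
    then have y: "bgrid T (a' - 1) < y" "y \<le> bgrid T a'" using a by (auto simp: bin_def)
    have "bgrid T a \<le> bgrid T (a' - 1)" using a by (intro bgrid_le) auto
    moreover have "y \<le> bgrid T a"
    proof (cases "a = 1")
      case True then show ?thesis using a by (simp add: bin_def bgrid_def)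
    next
      case False then show ?thesis using a by (simp add: bin_def)
    qed
    ultimately show False using y by linarith
  qed
  show False using ne assms key[of i i'] key[of i' i] by (cases "i < i'") auto
qed

lemma lab_eq: assumes "i \<in> {1..J}" shows "lab y = i \<longleftrightarrow> y \<in> bin T i"
proof
  assume "y \<in> bin T i"
  moreover have "(THE i. i \<in> {1..J} \<and> y \<in> bin T i) = i"
    using assms \<open>y \<in> bin T i\<close> bin_disj by (intro the_equality) auto
  ultimately show "lab y = i" using assms unfolding lab_def by auto
next
  assume l: "lab y = i"
  then have ex: "\<exists>i\<in>{1..J}. y \<in> bin T i" using assms unfolding lab_def by (auto split: if_splits)
  then obtain k where k: "k \<in> {1..J}" "y \<in> bin T k" by blast
  have "(THE i. i \<in> {1..J} \<and> y \<in> bin T i) = k"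
    using k bin_disj by (intro the_equality) auto
  then show "y \<in> bin T i" using l k ex unfolding lab_def by auto
qed

lemma lab_range: "lab y \<in> {0..J}"
proof (cases "\<exists>i\<in>{1..J}. y \<in> bin T i")
  case True
  then obtain k where k: "k \<in> {1..J}" "y \<in> bin T k" by blast
  then have "lab y = k" using lab_eq by blast
  then show ?thesis using k by auto
qed (auto simp: lab_def)

lemma lab_pre: "lab -` {l} \<in> sets borel"
proof -
  consider "l \<in> {1..J}" | "l = 0" | "l \<notin> {0..J}" by fastforce
  then show ?thesis
  proof cases
    case 1
    then have "lab -` {l} = bin T l" using lab_eq by auto
    then show ?thesis by (simp add: bin_def)
  next
    case 2
    have "lab -` {l} = - (\<Union>i\<in>{1..J}. bin T i)"
    proof -
      have "lab y = 0 \<longleftrightarrow> (\<forall>i\<in>{1..J}. y \<notin> bin T i)" for y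
      proof
        assume l0: "lab y = 0"
        show "\<forall>i\<in>{1..J}. y \<notin> bin T i"
        proof (intro ballI notI)
          fix i assume "i \<in> {1..J}" "y \<in> bin T i"
          then have "lab y = i" using lab_eq by blast
          then show False using l0 \<open>i \<in> {1..J}\<close> by auto
        qed
      qed (auto simp: lab_def)
      then show ?thesis using 2 by auto
    qed
    moreover have "(\<Union>i\<in>{1..J}. bin T i) \<in> sets borel" by (auto simp: bin_def)
    then have "- (\<Union>i\<in>{1..J}. bin T i) \<in> sets borel" by (rule borel_comp)
    ultimately show ?thesis by metis
  next
    case 3
    then have "lab -` {l} = {}" using lab_range by blast
    then show ?thesis by simp
  qed
qed

lemma pi_alt: "measure D (lab -` {l}) = pi l" by (simp add: pi_def)

lemma pi_nonneg: "pi l \<ge> 0" by (simp add: pi_def)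

lemma pi_bin: "k \<in> {1..J} \<Longrightarrow> pi k = measure D (bin T k)"
  unfolding pi_def using lab_eq by (metis (no_types, lifting) set_eq_iff vimage_singleton_eq)

lemma pi_sum1: "(\<Sum>l\<in>{0..J}. pi l) = 1"
proof -
  have "(\<Sum>l\<in>{0..J}. pi l) = measure D (\<Union>l\<in>{0..J}. lab -` {l})"
    unfolding pi_def using lab_pre
    by (intro D.finite_measure_finite_Union[symmetric]) (auto simp: disjoint_family_on_def)
  also have "(\<Union>l\<in>{0..J}. lab -` {l}) = UNIV" using lab_range by auto
  also have "measure D UNIV = 1" using D.prob_space D.borel_UNIV by simp
  finally show ?thesis .
qed

lemma neg_null: "measure D {..<0} = 0"
proof -
  have "measure D {..<0} \<le> measure D (UNIV - {0..1})"
    by (intro D.finite_measure_mono) auto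
  also have "\<dots> = 1 - measure D {0..1}"
    using D.prob_compl[of "{0..1}"] D.borel_UNIV by simp
  also have "measure D {0..1} = 1" using D01 by (simp add: measure_def)
  finally show ?thesis using measure_nonneg[of D "{..<0}"] by simp
qed

lemma cdf_sum: "j \<in> {1..J} \<Longrightarrow> cdf D (bgrid T j) = (\<Sum>i=1..j. pi i)"
proof (induction j)
  case 0 then show ?case by simp
next
  case (Suc j)
  show ?case
  proof (cases "j = 0")
    case True
    have "{..0::real} = {..<0} \<union> {0}" by auto
    moreover have "measure D ({..<0} \<union> {0}) = measure D {..<0} + measure D {0}"
      by (rule D.finite_measure_Union) auto
    ultimately have "cdf D 0 = measure D {..<0} + measure D {0}"
      unfolding cdf_def by simp
    then show ?thesis using True neg_null pi_bin[of 1] Suc.prems by (simp add: bgrid_def bin_def)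
  next
    case False
    then have j: "j \<in> {1..J}" using Suc.prems by auto
    have "cdf D (bgrid T (Suc j)) - cdf D (bgrid T j) = measure D {bgrid T j<..bgrid T (Suc j)}"
      by (intro D.cdf_diff_eq bgrid_less) simp
    also have "\<dots> = pi (Suc j)" using pi_bin[of "Suc j"] Suc.prems False by (simp add: bin_def)
    finally show ?thesis using Suc.IH[OF j] by simp
  qed
qed

lemma J_le_T: "J \<le> T"
proof -
  have s1: "1 \<le> sqrt (real T)" using T2 by simp
  have "sqrt (real T) * 1 \<le> sqrt (real T) * sqrt (real T)" using s1 by (intro mult_left_mono) auto
  moreover have "sqrt (real T) * sqrt (real T) = real T" by simp
  ultimately have "sqrt (real T) \<le> real T" by linarith
  then show ?thesis by (simp add: Jnum_def)
qed

lemma J1: "J \<ge> 1" unfolding Jnum_def using sqrtT_pos by linarith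

lemma J_sq_nat: "J ^ 2 \<le> 2 * T"
proof -
  have rJ: "real J = of_int \<lceil>sqrt (real T)\<rceil>" unfolding Jnum_def using sqrtT_pos by simp
  have c1: "real J - 1 < sqrt (real T)" using rJ ceiling_correct[of "sqrt (real T)"] by linarith
  have c0: "0 \<le> real J - 1" using J1 by simp
  have "(real J - 1)^2 < (sqrt (real T))^2" using c0 c1 by (intro power_strict_mono) auto
  then have "(real J - 1)^2 < real T" by simp
  moreover have "(real J - 1)^2 = real ((J - 1)^2)" using J1 by (simp add: of_nat_diff)
  ultimately have "(J - 1)^2 < T" by linarith
  then have a: "(J - 1)^2 + 1 \<le> T" by simp
  have b: "4 * (T - 1) \<le> T ^ 2"
  proof -
    obtain m where m: "T = m + 2" using T2 by (metis add.commute le_Suc_ex)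
    show ?thesis unfolding m by (simp add: power2_eq_square algebra_simps)
  qed
  have "(2 * (J - 1))^2 = 4 * (J - 1)^2" by (simp add: power2_eq_square)
  also have "\<dots> \<le> 4 * (T - 1)" using a by simp
  also have "\<dots> \<le> T^2" by (rule b)
  finally have c: "2 * (J - 1) \<le> T" by (rule power2_le_imp_le) simp
  have "J ^ 2 = (J - 1)^2 + 2 * (J - 1) + 1"
  proof -
    obtain k where "J = k + 1" using J1 by (metis add.commute le_Suc_ex)
    then show ?thesis by (simp add: power2_eq_square algebra_simps)
  qed
  then show ?thesis using a c by simp
qed

lemma J_sq: "real J ^ 2 \<le> 2 * real T"
  using J_sq_nat by (metis of_nat_le_iff of_nat_mult of_nat_numeral of_nat_power)

end

locale main = setting T D
  for T :: nat and D :: "real measure" +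
  fixes M :: "'a measure" and T0 :: nat and \<Phi> :: "'i set"
    and b m :: "'i \<Rightarrow> 'a \<Rightarrow> real" and m' :: "nat \<Rightarrow> 'a \<Rightarrow> real"
  assumes PM: "prob_space M"
    and fin: "finite \<Phi>"
    and T0: "T0 \<ge> nat \<lceil>sqrt (real T)\<rceil>"
    and bm: "\<And>\<tau>. \<tau> \<in> \<Phi> \<Longrightarrow> b \<tau> \<in> borel_measurable M"
    and mm: "\<And>\<tau>. \<tau> \<in> \<Phi> \<Longrightarrow> m \<tau> \<in> borel_measurable M"
    and m'm: "\<And>s. s \<in> {1..T0} \<Longrightarrow> m' s \<in> borel_measurable M"
    and indep: "\<And>B A A'. B \<in> sets (PiM \<Phi> (\<lambda>_. borel)) \<Longrightarrow>
        (\<forall>\<tau>\<in>\<Phi>. A \<tau> \<in> sets borel) \<Longrightarrow> (\<forall>s\<in>{1..T0}. A' s \<in> sets borel) \<Longrightarrow>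
        measure M {\<omega> \<in> space M. (\<lambda>\<tau>\<in>\<Phi>. b \<tau> \<omega>) \<in> B \<and> (\<forall>\<tau>\<in>\<Phi>. m \<tau> \<omega> \<in> A \<tau>)
                                  \<and> (\<forall>s\<in>{1..T0}. m' s \<omega> \<in> A' s)}
        = measure M {\<omega> \<in> space M. (\<lambda>\<tau>\<in>\<Phi>. b \<tau> \<omega>) \<in> B}
          * (\<Prod>\<tau>\<in>\<Phi>. measure D (A \<tau>)) * (\<Prod>s\<in>{1..T0}. measure D (A' s))"
begin

interpretation D: real_distribution D by (rule rd)
interpretation M: prob_space M by (rule PM)

definition pat :: "('i \<Rightarrow> real) \<Rightarrow> 'i \<Rightarrow> nat set" where
  "pat \<beta> = (\<lambda>\<tau>\<in>\<Phi>. {i\<in>{1..J}. bgrid T i \<le> \<beta> \<tau>})"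

definition nP :: "('i \<Rightarrow> nat set) \<Rightarrow> nat \<Rightarrow> nat" where
  "nP P i = card {\<tau>\<in>\<Phi>. i \<in> P \<tau>}"

definition wgt :: "('i \<Rightarrow> nat set) \<Rightarrow> nat \<Rightarrow> 'i \<Rightarrow> nat \<Rightarrow> real" where
  "wgt P j \<tau> l = (if l \<in> {1..j} \<and> l \<in> P \<tau> then 1 / real (nP P l) else 0)"

definition Gh :: "('i \<Rightarrow> nat set) \<Rightarrow> ('i \<Rightarrow> nat) \<Rightarrow> nat \<Rightarrow> real" where
  "Gh P \<phi> j = (\<Sum>\<tau>\<in>\<Phi>. wgt P j \<tau> (\<phi> \<tau>))"

definition p0 :: "(nat \<Rightarrow> nat) \<Rightarrow> nat \<Rightarrow> real" where
  "p0 \<phi>' k = (\<Sum>s\<in>{1..T0}. if \<phi>' s = k then 1 / real T0 else 0)"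

definition ub :: "('i \<Rightarrow> nat set) \<Rightarrow> (nat \<Rightarrow> nat) \<Rightarrow> nat \<Rightarrow> ereal" where
  "ub P \<phi>' j = (if \<exists>k\<in>{1..j}. nP P k = 0 then \<infinity>
      else ereal (8 * sqrt (\<Sum>k=1..j. 2 * ln (real T) / real (nP P k)
                              * (p0 \<phi>' k + 12 * ln (real T) / sqrt (real T)))
                 + 8 * ln (real T) / real (nP P j)))"

definition Rtot :: "('i \<Rightarrow> nat set) \<Rightarrow> ('i \<Rightarrow> nat) \<Rightarrow> (nat \<Rightarrow> nat) \<Rightarrow> bool" where
  "Rtot P \<phi> \<phi>' = (\<forall>j\<in>{1..J}.
            ereal \<bar>cdf D (bgrid T j) - Gh P \<phi> j\<bar> \<le> ub P \<phi>' j
          \<and> ereal ((1 / sqrt (real T)) * \<bar>\<Sum>i=1..j. cdf D (bgrid T i) - Gh P \<phi> i\<bar>) \<le> ub P \<phi>' j)"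

lemma ncount_eq: "i \<in> {1..J} \<Longrightarrow> ncount T \<Phi> \<beta> i = nP (pat \<beta>) i"
  unfolding ncount_def nP_def pat_def by (intro arg_cong[where f=card]) auto

lemma phat_eq:
  assumes "i \<in> {1..J}"
  shows "phat T \<Phi> \<beta> hob i = (\<Sum>\<tau>\<in>\<Phi>. if i \<in> pat \<beta> \<tau> \<and> lab (hob \<tau>) = i then 1 / real (nP (pat \<beta>) i) else 0)"
proof -
  have "phat T \<Phi> \<beta> hob i = (\<Sum>\<tau>\<in>\<Phi>. (if \<beta> \<tau> \<ge> bgrid T i \<and> hob \<tau> \<in> bin T i then 1 else 0)) / real (nP (pat \<beta>) i)"
    unfolding phat_def using ncount_eq[OF assms] by simp
  also have "\<dots> = (\<Sum>\<tau>\<in>\<Phi>. (if \<beta> \<tau> \<ge> bgrid T i \<and> hob \<tau> \<in> bin T i then 1 / real (nP (pat \<beta>) i) else 0))"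
    unfolding sum_divide_distrib by (intro sum.cong refl) simp
  also have "\<dots> = (\<Sum>\<tau>\<in>\<Phi>. if i \<in> pat \<beta> \<tau> \<and> lab (hob \<tau>) = i then 1 / real (nP (pat \<beta>) i) else 0)"
    using assms lab_eq[OF assms] by (intro sum.cong refl) (auto simp: pat_def)
  finally show ?thesis .
qed

lemma Ghat_eq:
  assumes "j \<le> J"
  shows "Ghat T \<Phi> \<beta> hob j = Gh (pat \<beta>) (\<lambda>\<tau>\<in>\<Phi>. lab (hob \<tau>)) j"
proof -
  have "Ghat T \<Phi> \<beta> hob j = (\<Sum>i=1..j. \<Sum>\<tau>\<in>\<Phi>. if i \<in> pat \<beta> \<tau> \<and> lab (hob \<tau>) = i then 1 / real (nP (pat \<beta>) i) else 0)"
    unfolding Ghat_def using assms by (intro sum.cong refl phat_eq) auto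
  also have "\<dots> = (\<Sum>\<tau>\<in>\<Phi>. \<Sum>i=1..j. if i \<in> pat \<beta> \<tau> \<and> lab (hob \<tau>) = i then 1 / real (nP (pat \<beta>) i) else 0)"
    by (rule sum.swap)
  also have "\<dots> = (\<Sum>\<tau>\<in>\<Phi>. wgt (pat \<beta>) j \<tau> (lab (hob \<tau>)))"
  proof (intro sum.cong refl)
    fix \<tau>
    have "(\<Sum>i=1..j. if i \<in> pat \<beta> \<tau> \<and> lab (hob \<tau>) = i then 1 / real (nP (pat \<beta>) i) else 0)
        = (\<Sum>i\<in>{1..j}. if i = lab (hob \<tau>) then (if i \<in> pat \<beta> \<tau> then 1 / real (nP (pat \<beta>) i) else 0) else 0)"
      by (intro sum.cong refl) auto
    also have "\<dots> = wgt (pat \<beta>) j \<tau> (lab (hob \<tau>))"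
      by (subst sum.delta) (auto simp: wgt_def)
    finally show "(\<Sum>i=1..j. if i \<in> pat \<beta> \<tau> \<and> lab (hob \<tau>) = i then 1 / real (nP (pat \<beta>) i) else 0)
        = wgt (pat \<beta>) j \<tau> (lab (hob \<tau>))" .
  qed
  finally show ?thesis unfolding Gh_def by simp
qed

lemma phat0_eq:
  assumes "k \<in> {1..J}"
  shows "phat0 T T0 hob' k = p0 (\<lambda>s\<in>{1..T0}. lab (hob' s)) k"
  unfolding phat0_def p0_def sum_distrib_left
  by (intro sum.cong refl) (auto simp: indicator_def lab_eq[OF assms])

lemma ubound_eq:
  assumes "j \<in> {1..J}"
  shows "ubound T T0 \<Phi> \<beta> hob' j = ub (pat \<beta>) (\<lambda>s\<in>{1..T0}. lab (hob' s)) j"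
proof -
  have n: "\<And>k. k \<in> {1..j} \<Longrightarrow> ncount T \<Phi> \<beta> k = nP (pat \<beta>) k" using assms ncount_eq by auto
  have p: "\<And>k. k \<in> {1..j} \<Longrightarrow> phat0 T T0 hob' k = p0 (\<lambda>s\<in>{1..T0}. lab (hob' s)) k" using assms phat0_eq by auto
  have "ncount T \<Phi> \<beta> j = nP (pat \<beta>) j" using n assms by auto
  moreover have "(\<Sum>k=1..j. 2 * ln (real T) / real (ncount T \<Phi> \<beta> k)
                              * (phat0 T T0 hob' k + 12 * ln (real T) / sqrt (real T)))
     = (\<Sum>k=1..j. 2 * ln (real T) / real (nP (pat \<beta>) k)
                              * (p0 (\<lambda>s\<in>{1..T0}. lab (hob' s)) k + 12 * ln (real T) / sqrt (real T)))"
    using n p by (intro sum.cong refl) auto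
  moreover have "(\<exists>k\<in>{1..j}. ncount T \<Phi> \<beta> k = 0) = (\<exists>k\<in>{1..j}. nP (pat \<beta>) k = 0)"
    using n by auto
  ultimately show ?thesis unfolding ubound_def ub_def by simp
qed

lemma target_eq:
  "(\<forall>j\<in>{1..Jnum T}.
            ereal \<bar>cdf D (bgrid T j) - Ghat T \<Phi> \<beta> hob j\<bar> \<le> ubound T T0 \<Phi> \<beta> hob' j
          \<and> ereal ((1 / sqrt (real T)) * \<bar>\<Sum>i=1..j. cdf D (bgrid T i) - Ghat T \<Phi> \<beta> hob i\<bar>)
              \<le> ubound T T0 \<Phi> \<beta> hob' j)
   \<longleftrightarrow> Rtot (pat \<beta>) (\<lambda>\<tau>\<in>\<Phi>. lab (hob \<tau>)) (\<lambda>s\<in>{1..T0}. lab (hob' s))"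
proof -
  have "\<And>j. j \<in> {1..J} \<Longrightarrow> (\<Sum>i=1..j. cdf D (bgrid T i) - Ghat T \<Phi> \<beta> hob i)
     = (\<Sum>i=1..j. cdf D (bgrid T i) - Gh (pat \<beta>) (\<lambda>\<tau>\<in>\<Phi>. lab (hob \<tau>)) i)"
    using Ghat_eq by (intro sum.cong refl) auto
  then show ?thesis unfolding Rtot_def using Ghat_eq ubound_eq by auto
qed

end

context main begin

interpretation D: real_distribution D by (rule rd)
interpretation M: prob_space M by (rule PM)

definition "PS = PiE \<Phi> (\<lambda>_. Pow {1..J})"
definition "Bset P = {\<beta> \<in> space (PiM \<Phi> (\<lambda>_. borel)). \<forall>\<tau>\<in>\<Phi>. \<forall>i\<in>{1..J}. (bgrid T i \<le> \<beta> \<tau>) = (i \<in> P \<tau>)}"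
definition "bids \<omega> = (\<lambda>\<tau>\<in>\<Phi>. b \<tau> \<omega>)"
definition "labm \<omega> = (\<lambda>\<tau>\<in>\<Phi>. lab (m \<tau> \<omega>))"
definition "labm' \<omega> = (\<lambda>s\<in>{1..T0}. lab (m' s \<omega>))"
definition "EP P = {\<omega> \<in> space M. bids \<omega> \<in> Bset P}"

lemma finPS: "finite PS" unfolding PS_def using fin by (intro finite_PiE) auto

lemma pat_PS: "pat \<beta> \<in> PS" unfolding PS_def pat_def by auto

lemma pat_bids: "pat (bids \<omega>) = pat (\<lambda>\<tau>. b \<tau> \<omega>)" unfolding pat_def bids_def by (intro restrict_ext) auto

lemma Bset_sets: "Bset P \<in> sets (PiM \<Phi> (\<lambda>_. borel))"
  unfolding Bset_def
proof (intro sets_Collect_Ball_finite fin finite_atLeastAtMost)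
  fix \<tau> i assume \<tau>: "\<tau> \<in> \<Phi>"
  have c: "(\<lambda>\<beta>. \<beta> \<tau>) \<in> borel_measurable (PiM \<Phi> (\<lambda>_. borel))"
    using \<tau> by (rule measurable_component_singleton)
  show "{\<beta> \<in> space (PiM \<Phi> (\<lambda>_. borel)). (bgrid T i \<le> \<beta> \<tau>) = (i \<in> P \<tau>)} \<in> sets (PiM \<Phi> (\<lambda>_. borel))"
  proof (cases "i \<in> P \<tau>")
    case True
    have "{\<beta> \<in> space (PiM \<Phi> (\<lambda>_. borel)). (bgrid T i \<le> \<beta> \<tau>) = (i \<in> P \<tau>)}
        = (\<lambda>\<beta>. \<beta> \<tau>) -` {bgrid T i..} \<inter> space (PiM \<Phi> (\<lambda>_. borel))" using True by auto
    then show ?thesis using measurable_sets[OF c, of "{bgrid T i..}"] by simp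
  next
    case False
    have "{\<beta> \<in> space (PiM \<Phi> (\<lambda>_. borel)). (bgrid T i \<le> \<beta> \<tau>) = (i \<in> P \<tau>)}
        = (\<lambda>\<beta>. \<beta> \<tau>) -` {..<bgrid T i} \<inter> space (PiM \<Phi> (\<lambda>_. borel))" using False by auto
    then show ?thesis using measurable_sets[OF c, of "{..<bgrid T i}"] by simp
  qed
qed

lemma bids_space: "bids \<omega> \<in> space (PiM \<Phi> (\<lambda>_. borel))"
  unfolding bids_def by (simp add: space_PiM)

lemma Bset_iff:
  assumes P: "P \<in> PS" shows "bids \<omega> \<in> Bset P \<longleftrightarrow> pat (\<lambda>\<tau>. b \<tau> \<omega>) = P"
proof -
  have Pt: "\<And>\<tau>. \<tau> \<in> \<Phi> \<Longrightarrow> P \<tau> \<subseteq> {1..J}" and Pe: "\<And>\<tau>. \<tau> \<notin> \<Phi> \<Longrightarrow> P \<tau> = undefined"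
    using P unfolding PS_def by (auto simp: PiE_def extensional_def)
  have "bids \<omega> \<in> Bset P \<longleftrightarrow> (\<forall>\<tau>\<in>\<Phi>. \<forall>i\<in>{1..J}. (bgrid T i \<le> b \<tau> \<omega>) = (i \<in> P \<tau>))"
    using bids_space[of \<omega>] unfolding Bset_def bids_def by simp
  also have "\<dots> \<longleftrightarrow> (\<forall>\<tau>\<in>\<Phi>. {i\<in>{1..J}. bgrid T i \<le> b \<tau> \<omega>} = P \<tau>)"
  proof (intro ball_cong refl iffI)
    fix \<tau> assume "\<tau> \<in> \<Phi>" "\<forall>i\<in>{1..J}. (bgrid T i \<le> b \<tau> \<omega>) = (i \<in> P \<tau>)"
    then show "{i\<in>{1..J}. bgrid T i \<le> b \<tau> \<omega>} = P \<tau>" using Pt[of \<tau>] by blast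
  next
    fix \<tau> assume "\<tau> \<in> \<Phi>" "{i\<in>{1..J}. bgrid T i \<le> b \<tau> \<omega>} = P \<tau>"
    then show "\<forall>i\<in>{1..J}. (bgrid T i \<le> b \<tau> \<omega>) = (i \<in> P \<tau>)" by blast
  qed
  also have "\<dots> \<longleftrightarrow> pat (\<lambda>\<tau>. b \<tau> \<omega>) = P"
  proof
    assume a: "\<forall>\<tau>\<in>\<Phi>. {i\<in>{1..J}. bgrid T i \<le> b \<tau> \<omega>} = P \<tau>"
    show "pat (\<lambda>\<tau>. b \<tau> \<omega>) = P"
    proof
      fix \<tau> show "pat (\<lambda>\<tau>. b \<tau> \<omega>) \<tau> = P \<tau>"
        using a Pe[of \<tau>] by (cases "\<tau> \<in> \<Phi>") (simp_all add: pat_def)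
    qed
  next
    assume "pat (\<lambda>\<tau>. b \<tau> \<omega>) = P"
    then show "\<forall>\<tau>\<in>\<Phi>. {i\<in>{1..J}. bgrid T i \<le> b \<tau> \<omega>} = P \<tau>"
      by (auto simp: pat_def)
  qed
  finally show ?thesis .
qed

lemma bids_meas: "bids \<in> measurable M (PiM \<Phi> (\<lambda>_. borel))"
  unfolding bids_def using bm by (intro measurable_restrict) auto

lemma EP_sets: "EP P \<in> sets M"
proof -
  have "EP P = bids -` Bset P \<inter> space M" unfolding EP_def by auto
  then show ?thesis using measurable_sets[OF bids_meas Bset_sets] by simp
qed

lemma pre_sets: 
  assumes "finite I" "\<And>i. i \<in> I \<Longrightarrow> X i \<in> borel_measurable M"
  shows "{\<omega>\<in>space M. \<forall>i\<in>I. X i \<omega> \<in> lab -` {\<phi> i}} \<in> sets M"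
proof (rule sets_Collect_Ball_finite[OF assms(1)])
  fix i assume i: "i \<in> I"
  have "{x \<in> space M. X i x \<in> lab -` {\<phi> i}} = X i -` (lab -` {\<phi> i}) \<inter> space M" by auto
  then show "{x \<in> space M. X i x \<in> lab -` {\<phi> i}} \<in> sets M"
    using measurable_sets[OF assms(2)[OF i] lab_pre] by simp
qed

lemma FIB: "{\<omega>\<in>space M. R (pat (\<lambda>\<tau>. b \<tau> \<omega>)) (labm \<omega>) (labm' \<omega>)} \<in> sets M"
proof -
  define Z where "Z = PS \<times> PiE \<Phi> (\<lambda>_. {0..J}) \<times> PiE {1..T0} (\<lambda>_. {0..J})"
  define F where "F z = EP (fst z) \<inter> {\<omega>\<in>space M. \<forall>\<tau>\<in>\<Phi>. m \<tau> \<omega> \<in> lab -` {fst (snd z) \<tau>}}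
      \<inter> {\<omega>\<in>space M. \<forall>s\<in>{1..T0}. m' s \<omega> \<in> lab -` {snd (snd z) s}}" for z
  have fZ: "finite Z" unfolding Z_def using finPS fin by (intro finite_cartesian_product finite_PiE) auto
  have Fs: "F z \<in> sets M" for z
    unfolding F_def by (intro sets.Int EP_sets pre_sets fin mm m'm finite_atLeastAtMost) auto
  have "{\<omega>\<in>space M. R (pat (\<lambda>\<tau>. b \<tau> \<omega>)) (labm \<omega>) (labm' \<omega>)} = (\<Union>z\<in>{z\<in>Z. R (fst z) (fst (snd z)) (snd (snd z))}. F z)"
  proof (intro equalityI subsetI)
    fix \<omega> assume \<omega>: "\<omega> \<in> {\<omega>\<in>space M. R (pat (\<lambda>\<tau>. b \<tau> \<omega>)) (labm \<omega>) (labm' \<omega>)}"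
    let ?z = "(pat (\<lambda>\<tau>. b \<tau> \<omega>), labm \<omega>, labm' \<omega>)"
    have "?z \<in> Z" unfolding Z_def using pat_PS lab_range by (auto simp: labm_def labm'_def)
    moreover have "\<omega> \<in> F ?z" unfolding F_def EP_def using \<omega> Bset_iff[OF pat_PS] by (auto simp: labm_def labm'_def)
    ultimately show "\<omega> \<in> (\<Union>z\<in>{z\<in>Z. R (fst z) (fst (snd z)) (snd (snd z))}. F z)" using \<omega> by auto
  next
    fix \<omega> assume "\<omega> \<in> (\<Union>z\<in>{z\<in>Z. R (fst z) (fst (snd z)) (snd (snd z))}. F z)"
    then obtain P \<phi> \<phi>' where z: "(P, \<phi>, \<phi>') \<in> Z" "R P \<phi> \<phi>'" "\<omega> \<in> F (P, \<phi>, \<phi>')" by auto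
    then have "pat (\<lambda>\<tau>. b \<tau> \<omega>) = P" using Bset_iff by (auto simp: Z_def F_def EP_def)
    moreover have "labm \<omega> = \<phi>" using z by (auto simp: Z_def F_def labm_def PiE_def extensional_def fun_eq_iff)
    moreover have "labm' \<omega> = \<phi>'" using z by (auto simp: Z_def F_def labm'_def PiE_def extensional_def fun_eq_iff)
    ultimately show "\<omega> \<in> {\<omega>\<in>space M. R (pat (\<lambda>\<tau>. b \<tau> \<omega>)) (labm \<omega>) (labm' \<omega>)}" using z by (auto simp: F_def)
  qed
  moreover have "(\<Union>z\<in>{z\<in>Z. R (fst z) (fst (snd z)) (snd (snd z))}. F z) \<in> sets M"
    using fZ Fs by (intro sets.finite_UN) auto
  ultimately show ?thesis by simp
qed

lemma pattern_bound:
  assumes Q: "\<And>P. P \<in> PS \<Longrightarrow> (\<Sum>\<phi>\<in>PiE \<Phi> (\<lambda>_. {0..J}). if Q P \<phi> then (\<Prod>\<tau>\<in>\<Phi>. pi (\<phi> \<tau>)) else 0) \<le> \<delta>"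
    and d: "\<delta> \<ge> 0"
  shows "measure M {\<omega>\<in>space M. Q (pat (\<lambda>\<tau>. b \<tau> \<omega>)) (labm \<omega>)} \<le> \<delta>"
proof -
  define A where "A P = {\<omega>\<in>space M. \<omega> \<in> EP P \<and> Q P (labm \<omega>)}" for P
  have As: "A P \<in> sets M" if PP: "P \<in> PS" for P
  proof -
    have "A P = {\<omega>\<in>space M. pat (\<lambda>\<tau>. b \<tau> \<omega>) = P \<and> Q P (labm \<omega>)}"
      unfolding A_def EP_def using Bset_iff[OF PP] by auto
    then show ?thesis using FIB[of "\<lambda>P' \<phi> \<phi>'. P' = P \<and> Q P \<phi>"] by auto
  qed
  have "{\<omega>\<in>space M. Q (pat (\<lambda>\<tau>. b \<tau> \<omega>)) (labm \<omega>)} = (\<Union>P\<in>PS. A P)"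
    unfolding A_def EP_def using Bset_iff pat_PS by auto
  then have "measure M {\<omega>\<in>space M. Q (pat (\<lambda>\<tau>. b \<tau> \<omega>)) (labm \<omega>)} \<le> (\<Sum>P\<in>PS. measure M (A P))"
    using M.finite_measure_subadditive_finite[OF finPS] As by auto
  also have "\<dots> \<le> (\<Sum>P\<in>PS. measure M (EP P) * \<delta>)"
  proof (intro sum_mono)
    fix P assume P: "P \<in> PS"
    have "measure M (A P) = measure M (EP P) * (\<Sum>\<phi>\<in>PiE \<Phi> (\<lambda>_. {0..J}). if Q P \<phi> then (\<Prod>\<tau>\<in>\<Phi>. measure D (lab -` {\<phi> \<tau>})) else 0)"
      unfolding A_def labm_def
    proof (rule gl[OF PM fin _ EP_sets mm lab_pre lab_range])
      show "finite {0..J}" by simp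
      fix A' :: "'i \<Rightarrow> real set" assume A': "\<forall>i\<in>\<Phi>. A' i \<in> sets borel"
      have eqA: "{\<omega> \<in> space M. \<omega> \<in> EP P \<and> (\<forall>i\<in>\<Phi>. m i \<omega> \<in> A' i)}
         = {\<omega> \<in> space M. (\<lambda>\<tau>\<in>\<Phi>. b \<tau> \<omega>) \<in> Bset P \<and> (\<forall>\<tau>\<in>\<Phi>. m \<tau> \<omega> \<in> A' \<tau>)
                                  \<and> (\<forall>s\<in>{1..T0}. m' s \<omega> \<in> UNIV)}"
        unfolding EP_def bids_def by blast
      have eqE: "EP P = {\<omega> \<in> space M. (\<lambda>\<tau>\<in>\<Phi>. b \<tau> \<omega>) \<in> Bset P}"
        unfolding EP_def bids_def by (rule refl)
      have u1: "measure D UNIV = 1" using D.prob_space D.borel_UNIV by simp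
      have p1: "(\<Prod>s\<in>{1..T0}. measure D (UNIV::real set)) = 1" unfolding u1 by simp
      have "measure M {\<omega> \<in> space M. \<omega> \<in> EP P \<and> (\<forall>i\<in>\<Phi>. m i \<omega> \<in> A' i)}
         = measure M {\<omega> \<in> space M. (\<lambda>\<tau>\<in>\<Phi>. b \<tau> \<omega>) \<in> Bset P}
          * (\<Prod>\<tau>\<in>\<Phi>. measure D (A' \<tau>)) * (\<Prod>s\<in>{1..T0}. measure D UNIV)"
        unfolding eqA using A' by (intro indep Bset_sets) auto
      then show "measure M {\<omega> \<in> space M. \<omega> \<in> EP P \<and> (\<forall>i\<in>\<Phi>. m i \<omega> \<in> A' i)} =
          measure M (EP P) * (\<Prod>i\<in>\<Phi>. measure D (A' i))" unfolding p1 eqE[symmetric] by simp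
    qed
    also have "\<dots> \<le> measure M (EP P) * \<delta>"
    proof (rule mult_left_mono)
      show "(\<Sum>\<phi>\<in>PiE \<Phi> (\<lambda>_. {0..J}). if Q P \<phi> then (\<Prod>\<tau>\<in>\<Phi>. measure D (lab -` {\<phi> \<tau>})) else 0) \<le> \<delta>"
        unfolding pi_alt by (rule Q[OF P])
    qed simp
    finally show "measure M (A P) \<le> measure M (EP P) * \<delta>" .
  qed
  also have "\<dots> = measure M (\<Union>P\<in>PS. EP P) * \<delta>"
  proof -
    have "disjoint_family_on EP PS"
      unfolding disjoint_family_on_def EP_def using Bset_iff by auto
    then have "measure M (\<Union>P\<in>PS. EP P) = (\<Sum>P\<in>PS. measure M (EP P))"
      using finPS EP_sets by (intro M.finite_measure_finite_Union) auto
    then show ?thesis by (simp add: sum_distrib_right)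
  qed
  also have "\<dots> \<le> 1 * \<delta>" using d by (intro mult_right_mono) auto
  finally show ?thesis by simp
qed

lemma mprime_bound:
  "measure M {\<omega>\<in>space M. Q (labm' \<omega>)}
    = (\<Sum>\<phi>\<in>PiE {1..T0} (\<lambda>_. {0..J}). if Q \<phi> then (\<Prod>s\<in>{1..T0}. pi (\<phi> s)) else 0)"
proof -
  have "measure M {\<omega>\<in>space M. \<omega> \<in> space M \<and> Q (\<lambda>s\<in>{1..T0}. lab (m' s \<omega>))}
     = measure M (space M) * (\<Sum>\<phi>\<in>PiE {1..T0} (\<lambda>_. {0..J}). if Q \<phi> then (\<Prod>s\<in>{1..T0}. measure D (lab -` {\<phi> s})) else 0)"
  proof (rule gl[OF PM _ _ _ m'm lab_pre lab_range])
    fix A' :: "nat \<Rightarrow> real set" assume A': "\<forall>i\<in>{1..T0}. A' i \<in> sets borel"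
    have "measure M {\<omega> \<in> space M. \<omega> \<in> space M \<and> (\<forall>i\<in>{1..T0}. m' i \<omega> \<in> A' i)}
       = measure M {\<omega> \<in> space M. (\<lambda>\<tau>\<in>\<Phi>. b \<tau> \<omega>) \<in> space (PiM \<Phi> (\<lambda>_. borel)) \<and> (\<forall>\<tau>\<in>\<Phi>. m \<tau> \<omega> \<in> UNIV)
                                  \<and> (\<forall>s\<in>{1..T0}. m' s \<omega> \<in> A' s)}"
      by (intro arg_cong[where f="measure M"]) (auto simp: space_PiM)
    also have "\<dots> = measure M {\<omega> \<in> space M. (\<lambda>\<tau>\<in>\<Phi>. b \<tau> \<omega>) \<in> space (PiM \<Phi> (\<lambda>_. borel))}
          * (\<Prod>\<tau>\<in>\<Phi>. measure D UNIV) * (\<Prod>s\<in>{1..T0}. measure D (A' s))"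
      using A' by (intro indep) auto
    also have "measure D UNIV = 1" using D.prob_space D.borel_UNIV by simp
    also have "{\<omega> \<in> space M. (\<lambda>\<tau>\<in>\<Phi>. b \<tau> \<omega>) \<in> space (PiM \<Phi> (\<lambda>_. borel))} = space M"
      by (auto simp: space_PiM)
    finally show "measure M {\<omega> \<in> space M. \<omega> \<in> space M \<and> (\<forall>i\<in>{1..T0}. m' i \<omega> \<in> A' i)} =
          measure M (space M) * (\<Prod>i\<in>{1..T0}. measure D (A' i))" by simp
  qed auto
  then show ?thesis using M.prob_space unfolding labm'_def pi_alt by simp
qed

end

lemma exp_neg_bound:
  fixes z :: real assumes "z \<le> 0" shows "exp z \<le> 1 + z + z\<^sup>2 / 2"
proof -
  obtain t where "exp z = (\<Sum>m<3. (z ^ m) / fact m) + (exp t / fact 3) * z ^ 3"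
    using Maclaurin_exp_le[of z 3] by blast
  moreover have "(exp t / fact 3) * z ^ 3 \<le> 0"
    using assms by (intro mult_nonneg_nonpos) (auto simp: power_odd_eq)
  moreover have "(\<Sum>m<3. (z ^ m) / fact m) = 1 + z + z\<^sup>2/2"
    by (simp add: numeral_3_eq_3 power2_eq_square)
  ultimately show ?thesis by linarith
qed

lemma mgf2:
  fixes \<pi> w :: "'l \<Rightarrow> real"
  assumes "finite L" "\<And>l. l \<in> L \<Longrightarrow> \<pi> l \<ge> 0" "(\<Sum>l\<in>L. \<pi> l) = 1"
    "\<And>l. l \<in> L \<Longrightarrow> w l \<ge> 0" "lam \<ge> 0"
  shows "(\<Sum>l\<in>L. \<pi> l * exp (lam * ((\<Sum>l\<in>L. \<pi> l * w l) - w l))) \<le> exp (lam\<^sup>2 * ((\<Sum>l\<in>L. \<pi> l * (w l)\<^sup>2) / 2))"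
proof -
  define \<mu> where "\<mu> = (\<Sum>l\<in>L. \<pi> l * w l)"
  define S where "S = (\<Sum>l\<in>L. \<pi> l * (w l)\<^sup>2)"
  have "(\<Sum>l\<in>L. \<pi> l * exp (lam * (\<mu> - w l))) = exp (lam * \<mu>) * (\<Sum>l\<in>L. \<pi> l * exp (- (lam * w l)))"
    by (simp add: sum_distrib_left right_diff_distrib exp_diff exp_minus field_simps)
  also have "\<dots> \<le> exp (lam * \<mu>) * (\<Sum>l\<in>L. \<pi> l * (1 + (- (lam * w l)) + (- (lam * w l))\<^sup>2 / 2))"
    using assms by (intro mult_left_mono sum_mono exp_neg_bound) auto
  also have "(\<Sum>l\<in>L. \<pi> l * (1 + (- (lam * w l)) + (- (lam * w l))\<^sup>2 / 2)) = 1 - lam * \<mu> + lam\<^sup>2 * S / 2"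
  proof -
    have "(\<Sum>l\<in>L. \<pi> l * (1 + (- (lam * w l)) + (- (lam * w l))\<^sup>2 / 2))
        = (\<Sum>l\<in>L. \<pi> l - lam * (\<pi> l * w l) + lam\<^sup>2 / 2 * (\<pi> l * (w l)\<^sup>2))"
      by (intro sum.cong refl) (simp add: algebra_simps power2_eq_square)
    also have "\<dots> = (\<Sum>l\<in>L. \<pi> l) - lam * \<mu> + lam\<^sup>2 / 2 * S"
      by (simp add: sum.distrib sum_subtractf sum_distrib_left \<mu>_def S_def)
    finally show ?thesis using assms(3) by simp
  qed
  also have "exp (lam * \<mu>) * (1 - lam * \<mu> + lam\<^sup>2 * S / 2) \<le> exp (lam * \<mu>) * exp (- (lam * \<mu>) + lam\<^sup>2 * S / 2)"
  proof (rule mult_left_mono)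
    show "1 - lam * \<mu> + lam\<^sup>2 * S / 2 \<le> exp (- (lam * \<mu>) + lam\<^sup>2 * S / 2)"
      using exp_ge_add_one_self[of "- (lam * \<mu>) + lam\<^sup>2 * S / 2"] by linarith
  qed simp
  also have "\<dots> = exp (lam\<^sup>2 * (S / 2))" by (simp add: exp_add[symmetric])
  finally show ?thesis by (simp add: \<mu>_def S_def)
qed

lemma tail_opt2:
  fixes P t V x :: real
  assumes "\<And>lam. 0 \<le> lam \<Longrightarrow> P \<le> exp (- lam * t + lam\<^sup>2 * V)"
    "V > 0" "x \<ge> 0" "t \<ge> 2 * sqrt (V * x)"
  shows "P \<le> exp (- x)"
proof -
  define lam where "lam = sqrt (x / V)"
  have l0: "lam \<ge> 0" using assms by (simp add: lam_def)
  have "lam * (2 * sqrt (V * x)) = 2 * x"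
    using assms by (simp add: lam_def real_sqrt_mult[symmetric] real_sqrt_mult_self)
  then have "lam * t \<ge> 2 * x" using assms(4) l0 by (metis mult_left_mono)
  moreover have "lam\<^sup>2 * V = x" using assms by (simp add: lam_def)
  ultimately have "- lam * t + lam\<^sup>2 * V \<le> - x" by linarith
  then show ?thesis using assms(1)[OF l0] by (meson exp_le_cancel_iff order_trans)
qed

lemma chernoff_lower:
  fixes \<pi> :: "'l \<Rightarrow> real" and w :: "'j \<Rightarrow> 'l \<Rightarrow> real"
  assumes I: "finite I" and L: "finite L" and pi0: "\<And>l. l \<in> L \<Longrightarrow> \<pi> l \<ge> 0"
    and pi1: "(\<Sum>l\<in>L. \<pi> l) = 1"
    and w: "\<And>i l. i \<in> I \<Longrightarrow> l \<in> L \<Longrightarrow> 0 \<le> w i l"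
    and V: "(\<Sum>i\<in>I. \<Sum>l\<in>L. \<pi> l * (w i l)\<^sup>2) / 2 \<le> V" and Vp: "V > 0"
    and x: "x \<ge> 0" and t: "t \<ge> 2 * sqrt (V * x)"
  shows "(\<Sum>\<phi>\<in>PiE I (\<lambda>_. L). if t \<le> (\<Sum>i\<in>I. (\<Sum>l\<in>L. \<pi> l * w i l) - w i (\<phi> i))
            then (\<Prod>i\<in>I. \<pi> (\<phi> i)) else 0) \<le> exp (- x)"
proof (rule tail_opt2[OF _ Vp x t])
  fix lam :: real assume l0: "0 \<le> lam"
  have "(\<Sum>\<phi>\<in>PiE I (\<lambda>_. L). if t \<le> (\<Sum>i\<in>I. (\<Sum>l\<in>L. \<pi> l * w i l) - w i (\<phi> i)) then (\<Prod>i\<in>I. \<pi> (\<phi> i)) else 0)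
        \<le> exp (- lam * t) * (\<Prod>i\<in>I. \<Sum>l\<in>L. \<pi> l * exp (lam * ((\<Sum>l\<in>L. \<pi> l * w i l) - w i l)))"
    by (rule chernoff_fin[OF I L pi0 l0])
  also have "\<dots> \<le> exp (- lam * t) * (\<Prod>i\<in>I. exp (lam\<^sup>2 * ((\<Sum>l\<in>L. \<pi> l * (w i l)\<^sup>2) / 2)))"
    using pi0 w l0 by (intro mult_left_mono prod_mono conjI sum_nonneg mgf2[OF L _ pi1]) (auto intro!: mult_nonneg_nonneg)
  also have "\<dots> = exp (- lam * t) * exp (lam\<^sup>2 * ((\<Sum>i\<in>I. \<Sum>l\<in>L. \<pi> l * (w i l)\<^sup>2) / 2))"
    using I by (simp add: exp_sum sum_distrib_left sum_divide_distrib)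
  also have "\<dots> \<le> exp (- lam * t) * exp (lam\<^sup>2 * V)"
  proof -
    have "lam\<^sup>2 * ((\<Sum>i\<in>I. \<Sum>l\<in>L. \<pi> l * (w i l)\<^sup>2) / 2) \<le> lam\<^sup>2 * V"
      using V by (intro mult_left_mono) auto
    then show ?thesis by (intro mult_left_mono) auto
  qed
  also have "\<dots> = exp (- lam * t + lam\<^sup>2 * V)" by (simp only: exp_add[symmetric])
  finally show "(\<Sum>\<phi>\<in>PiE I (\<lambda>_. L). if t \<le> (\<Sum>i\<in>I. (\<Sum>l\<in>L. \<pi> l * w i l) - w i (\<phi> i))
            then (\<Prod>i\<in>I. \<pi> (\<phi> i)) else 0) \<le> exp (- lam * t + lam\<^sup>2 * V)" .
qed

lemma sum_if_or:
  fixes p :: "'x \<Rightarrow> real"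
  assumes "finite S" "\<And>x. x \<in> S \<Longrightarrow> p x \<ge> 0" "\<And>x. x \<in> S \<Longrightarrow> A x \<Longrightarrow> B x \<or> C x"
  shows "(\<Sum>x\<in>S. if A x then p x else 0) \<le> (\<Sum>x\<in>S. if B x then p x else 0) + (\<Sum>x\<in>S. if C x then p x else 0)"
  unfolding sum.distrib[symmetric] by (rule sum_mono) (use assms in auto)

lemma sum_if_ex:
  fixes p :: "'x \<Rightarrow> real"
  assumes "finite S" "finite K" "\<And>x. x \<in> S \<Longrightarrow> p x \<ge> 0"
  shows "(\<Sum>x\<in>S. if \<exists>k\<in>K. A k x then p x else 0) \<le> (\<Sum>k\<in>K. \<Sum>x\<in>S. if A k x then p x else 0)"
proof -
  have "(\<Sum>x\<in>S. if \<exists>k\<in>K. A k x then p x else 0) \<le> (\<Sum>x\<in>S. \<Sum>k\<in>K. if A k x then p x else 0)"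
  proof (intro sum_mono)
    fix x assume x: "x \<in> S"
    show "(if \<exists>k\<in>K. A k x then p x else 0) \<le> (\<Sum>k\<in>K. if A k x then p x else 0)"
    proof (cases "\<exists>k\<in>K. A k x")
      case True
      then obtain k where k: "k \<in> K" "A k x" by blast
      have "p x = (if A k x then p x else 0)" using k by simp
      also have "\<dots> \<le> (\<Sum>k\<in>K. if A k x then p x else 0)"
        using assms x k by (intro member_le_sum) auto
      finally show ?thesis using True by simp
    next
      case False then show ?thesis using assms x by (auto intro: sum_nonneg)
    qed
  qed
  also have "\<dots> = (\<Sum>k\<in>K. \<Sum>x\<in>S. if A k x then p x else 0)" by (rule sum.swap)
  finally show ?thesis .
qed

context main begin

definition "mono_pat P = (\<forall>\<tau>\<in>\<Phi>. \<forall>i\<in>P \<tau>. \<forall>i'. 1 \<le> i' \<and> i' \<le> i \<longrightarrow> i' \<in> P \<tau>)"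
definition "Vv P j = (\<Sum>i=1..j. pi i / real (nP P i))"
definition "tt P j = 2 * sqrt (Vv P j * (8 * ln (real T))) + 2 * (1 / real (nP P j)) * (8 * ln (real T)) / 3"

lemma lnT_pos: "ln (real T) > 0" using T2 by simp

lemma pat_mono: "mono_pat (pat \<beta>)"
  unfolding mono_pat_def pat_def using bgrid_le by (auto intro: order_trans)

lemma nP_anti: "mono_pat P \<Longrightarrow> 1 \<le> i \<Longrightarrow> i \<le> j \<Longrightarrow> nP P j \<le> nP P i"
  unfolding nP_def mono_pat_def using fin by (intro card_mono) auto

lemma sum_wgt:
  assumes "j \<le> J" "f 0 = 0"
  shows "(\<Sum>\<tau>\<in>\<Phi>. \<Sum>l\<in>{0..J}. pi l * f (wgt P j \<tau> l)) = (\<Sum>l=1..j. pi l * (real (nP P l) * f (1 / real (nP P l))))"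
proof -
  have "(\<Sum>\<tau>\<in>\<Phi>. \<Sum>l\<in>{0..J}. pi l * f (wgt P j \<tau> l)) = (\<Sum>\<tau>\<in>\<Phi>. \<Sum>l\<in>{1..j}. if l \<in> P \<tau> then pi l * f (1 / real (nP P l)) else 0)"
  proof (rule sum.cong[OF refl])
    fix \<tau>
    have "(\<Sum>l\<in>{0..J}. pi l * f (wgt P j \<tau> l)) = (\<Sum>l\<in>{1..j}. pi l * f (wgt P j \<tau> l))"
      using assms by (intro sum.mono_neutral_right) (auto simp: wgt_def)
    also have "\<dots> = (\<Sum>l\<in>{1..j}. if l \<in> P \<tau> then pi l * f (1 / real (nP P l)) else 0)"
      using assms by (intro sum.cong refl) (auto simp: wgt_def)
    finally show "(\<Sum>l\<in>{0..J}. pi l * f (wgt P j \<tau> l)) = (\<Sum>l\<in>{1..j}. if l \<in> P \<tau> then pi l * f (1 / real (nP P l)) else 0)" .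
  qed
  also have "\<dots> = (\<Sum>l\<in>{1..j}. \<Sum>\<tau>\<in>\<Phi>. if l \<in> P \<tau> then pi l * f (1 / real (nP P l)) else 0)"
    by (rule sum.swap)
  also have "\<dots> = (\<Sum>l=1..j. pi l * (real (nP P l) * f (1 / real (nP P l))))"
  proof (rule sum.cong[OF refl])
    fix l
    have "(\<Sum>\<tau>\<in>\<Phi>. if l \<in> P \<tau> then pi l * f (1 / real (nP P l)) else 0)
        = (\<Sum>\<tau>\<in>{\<tau>\<in>\<Phi>. l \<in> P \<tau>}. pi l * f (1 / real (nP P l)))"
      by (rule sum.inter_filter[OF fin, symmetric])
    also have "\<dots> = real (nP P l) * (pi l * f (1 / real (nP P l)))" by (simp add: nP_def)
    finally show "(\<Sum>\<tau>\<in>\<Phi>. if l \<in> P \<tau> then pi l * f (1 / real (nP P l)) else 0) = pi l * (real (nP P l) * f (1 / real (nP P l)))"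
      by simp
  qed
  finally show ?thesis .
qed

lemma m_tail:
  assumes j: "j \<in> {1..J}" and sg: "\<sigma> = 1 \<or> \<sigma> = -1"
  shows "(\<Sum>\<phi>\<in>PiE \<Phi> (\<lambda>_. {0..J}). if mono_pat P \<and> nP P j \<ge> 1 \<and> tt P j \<le> \<sigma> * (Gh P \<phi> j - cdf D (bgrid T j))
            then (\<Prod>\<tau>\<in>\<Phi>. pi (\<phi> \<tau>)) else 0) \<le> exp (- (8 * ln (real T)))"
proof (cases "mono_pat P \<and> nP P j \<ge> 1")
  case False
  have "(\<Sum>\<phi>\<in>PiE \<Phi> (\<lambda>_. {0..J}). if mono_pat P \<and> nP P j \<ge> 1 \<and> tt P j \<le> \<sigma> * (Gh P \<phi> j - cdf D (bgrid T j))
            then (\<Prod>\<tau>\<in>\<Phi>. pi (\<phi> \<tau>)) else 0) = 0" using False by (intro sum.neutral) auto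
  then show ?thesis by simp
next
  case True
  then have mp: "mono_pat P" and nj: "nP P j \<ge> 1" by auto
  have nl: "nP P l \<ge> 1" if "l \<in> {1..j}" for l using nP_anti[OF mp, of l j] that nj by auto
  define \<mu> where "\<mu> \<tau> = (\<Sum>l\<in>{0..J}. pi l * wgt P j \<tau> l)" for \<tau>
  have smu: "(\<Sum>\<tau>\<in>\<Phi>. \<mu> \<tau>) = cdf D (bgrid T j)"
  proof -
    have "(\<Sum>\<tau>\<in>\<Phi>. \<mu> \<tau>) = (\<Sum>l=1..j. pi l * (real (nP P l) * (1 / real (nP P l))))"
      unfolding \<mu>_def using sum_wgt[of j "\<lambda>x. x" P] j by simp
    also have "\<dots> = (\<Sum>l=1..j. pi l)"
    proof (rule sum.cong[OF refl])
      fix l assume "l \<in> {1..j}"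
      then have "nP P l \<ge> 1" by (rule nl)
      then show "pi l * (real (nP P l) * (1 / real (nP P l))) = pi l" by simp
    qed
    finally show ?thesis using cdf_sum[OF j] by simp
  qed
  have var: "(\<Sum>\<tau>\<in>\<Phi>. \<Sum>l\<in>{0..J}. pi l * (wgt P j \<tau> l)\<^sup>2) \<le> Vv P j"
  proof -
    have "(\<Sum>\<tau>\<in>\<Phi>. \<Sum>l\<in>{0..J}. pi l * (wgt P j \<tau> l)\<^sup>2) = (\<Sum>l=1..j. pi l * (real (nP P l) * (1 / real (nP P l))\<^sup>2))"
      using sum_wgt[of j "\<lambda>x. x\<^sup>2" P] j by simp
    also have "\<dots> = Vv P j" unfolding Vv_def
    proof (rule sum.cong[OF refl])
      fix l assume "l \<in> {1..j}"
      then have "nP P l \<ge> 1" by (rule nl)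
      then show "pi l * (real (nP P l) * (1 / real (nP P l))\<^sup>2) = pi l / real (nP P l)"
        by (simp add: power2_eq_square)
    qed
    finally show ?thesis by simp
  qed
  have wb: "0 \<le> wgt P j \<tau> l \<and> wgt P j \<tau> l \<le> 1 / real (nP P j)" if "\<tau> \<in> \<Phi>" for \<tau> l
  proof (cases "l \<in> {1..j} \<and> l \<in> P \<tau>")
    case True
    then have "nP P j \<le> nP P l" using nP_anti[OF mp] by auto
    then have "1 / real (nP P l) \<le> 1 / real (nP P j)" using nj by (intro divide_left_mono) auto
    then show ?thesis using True by (simp add: wgt_def)
  qed (auto simp: wgt_def)
  have "(\<Sum>\<phi>\<in>PiE \<Phi> (\<lambda>_. {0..J}). if tt P j \<le> (\<Sum>\<tau>\<in>\<Phi>. \<sigma> * (wgt P j \<tau> (\<phi> \<tau>) - (\<Sum>l\<in>{0..J}. pi l * wgt P j \<tau> l)))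
            then (\<Prod>\<tau>\<in>\<Phi>. pi (\<phi> \<tau>)) else 0) \<le> exp (- (8 * ln (real T)))"
  proof (rule chernoff_full[OF fin _ pi_nonneg pi_sum1 _ _ sg var])
    show "1 / real (nP P j) > 0" using nj by simp
    show "0 \<le> 8 * ln (real T)" using lnT_pos by simp
    show "tt P j \<ge> 2 * sqrt (Vv P j * (8 * ln (real T))) + 2 * (1 / real (nP P j)) * (8 * ln (real T)) / 3"
      by (simp add: tt_def)
  qed (use wb in auto)
  moreover have "(\<Sum>\<tau>\<in>\<Phi>. \<sigma> * (wgt P j \<tau> (\<phi> \<tau>) - (\<Sum>l\<in>{0..J}. pi l * wgt P j \<tau> l))) = \<sigma> * (Gh P \<phi> j - cdf D (bgrid T j))" for \<phi>
    using smu unfolding \<mu>_def Gh_def by (simp add: sum_distrib_left[symmetric] sum_subtractf)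
  ultimately show ?thesis using True by simp
qed

end

context main begin

lemma T0_ge: "real T0 \<ge> sqrt (real T)"
proof -
  have "sqrt (real T) \<le> of_int \<lceil>sqrt (real T)\<rceil>" by (rule le_of_int_ceiling)
  also have "\<dots> = real (nat \<lceil>sqrt (real T)\<rceil>)" using sqrtT_pos by simp
  also have "\<dots> \<le> real T0" by (rule of_nat_mono[OF T0])
  finally show ?thesis .
qed

lemma T0_pos: "real T0 > 0" using T0_ge sqrtT_pos by linarith

lemma p0_nonneg: "p0 \<phi>' k \<ge> 0" unfolding p0_def by (intro sum_nonneg) auto

lemma amgm4: assumes "a \<ge> 0" "c \<ge> 0" shows "4 * sqrt (a * c) \<le> a / 2 + 8 * c"
proof -
  have ac: "a * c \<ge> 0" using assms by simp
  have e1: "(4 * sqrt (a * c))\<^sup>2 = 16 * (a * c)"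
    using ac by (simp add: power_mult_distrib)
  have e2: "(a / 2 + 8 * c)\<^sup>2 - 16 * (a * c) = (a / 2 - 8 * c)\<^sup>2"
    by (simp add: power2_eq_square algebra_simps)
  have "(4 * sqrt (a * c))\<^sup>2 \<le> (a / 2 + 8 * c)\<^sup>2"
    using e1 e2 zero_le_power2[of "a / 2 - 8 * c"] by linarith
  moreover have "0 \<le> a / 2 + 8 * c" using assms by simp
  ultimately show ?thesis by (rule power2_le_imp_le)
qed

lemma mp_tail:
  assumes k: "k \<in> {1..J}"
  shows "(\<Sum>\<phi>'\<in>PiE {1..T0} (\<lambda>_. {0..J}). if \<not> (pi k \<le> 2 * (p0 \<phi>' k + 12 * ln (real T) / sqrt (real T)))
            then (\<Prod>s\<in>{1..T0}. pi (\<phi>' s)) else 0) \<le> exp (- (8 * ln (real T)))"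
proof (cases "pi k = 0")
  case True
  have "(\<Sum>\<phi>'\<in>PiE {1..T0} (\<lambda>_. {0..J}). if \<not> (pi k \<le> 2 * (p0 \<phi>' k + 12 * ln (real T) / sqrt (real T)))
            then (\<Prod>s\<in>{1..T0}. pi (\<phi>' s)) else 0) = 0"
    using True p0_nonneg lnT_pos sqrtT_pos by (intro sum.neutral) (auto intro!: add_nonneg_nonneg)
  then show ?thesis by simp
next
  case False
  then have pk: "pi k > 0" using pi_nonneg[of k] by simp
  define w where "w s l = (if l = k then 1 / real T0 else 0)" for s :: nat and l :: nat
  define V where "V = pi k / (2 * real T0)"
  define t where "t = 2 * sqrt (V * (8 * ln (real T)))"
  have kJ: "k \<in> {0..J}" using k by auto
  have mu: "(\<Sum>l\<in>{0..J}. pi l * w s l) = pi k / real T0" for s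
  proof -
    have "(\<Sum>l\<in>{0..J}. pi l * w s l) = (\<Sum>l\<in>{0..J}. if l = k then pi l / real T0 else 0)"
      unfolding w_def by (intro sum.cong refl) auto
    also have "\<dots> = pi k / real T0" using kJ by (subst sum.delta) auto
    finally show ?thesis .
  qed
  have sq: "(\<Sum>l\<in>{0..J}. pi l * (w s l)\<^sup>2) = pi k / (real T0)\<^sup>2" for s
  proof -
    have "(\<Sum>l\<in>{0..J}. pi l * (w s l)\<^sup>2) = (\<Sum>l\<in>{0..J}. if l = k then pi l / (real T0)\<^sup>2 else 0)"
      unfolding w_def by (intro sum.cong refl) (auto simp: power_divide)
    also have "\<dots> = pi k / (real T0)\<^sup>2" using kJ by (subst sum.delta) auto
    finally show ?thesis .
  qed
  have ch: "(\<Sum>\<phi>'\<in>PiE {1..T0} (\<lambda>_. {0..J}). if t \<le> (\<Sum>s\<in>{1..T0}. (\<Sum>l\<in>{0..J}. pi l * w s l) - w s (\<phi>' s))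
            then (\<Prod>s\<in>{1..T0}. pi (\<phi>' s)) else 0) \<le> exp (- (8 * ln (real T)))"
  proof (rule chernoff_lower[OF _ _ pi_nonneg pi_sum1])
    show "(\<Sum>s\<in>{1..T0}. \<Sum>l\<in>{0..J}. pi l * (w s l)\<^sup>2) / 2 \<le> V"
      unfolding sq V_def using T0_pos by (simp add: power2_eq_square)
    show "V > 0" unfolding V_def using pk T0_pos by simp
    show "0 \<le> 8 * ln (real T)" using lnT_pos by simp
  qed (auto simp: w_def t_def)
  have key: "t \<le> (\<Sum>s\<in>{1..T0}. (\<Sum>l\<in>{0..J}. pi l * w s l) - w s (\<phi>' s))"
    if bad: "\<not> (pi k \<le> 2 * (p0 \<phi>' k + 12 * ln (real T) / sqrt (real T)))" for \<phi>'
  proof -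
    have S: "(\<Sum>s\<in>{1..T0}. (\<Sum>l\<in>{0..J}. pi l * w s l) - w s (\<phi>' s)) = pi k - p0 \<phi>' k"
      unfolding mu using T0_pos by (simp add: sum_subtractf p0_def w_def)
    have t1: "t = 4 * sqrt (pi k * (ln (real T) / real T0))"
    proof -
      have e: "V * (8 * ln (real T)) = 4 * (pi k * (ln (real T) / real T0))" unfolding V_def by simp
      have s4: "sqrt (4::real) = 2" by (rule real_sqrt_unique) auto
      have "sqrt (V * (8 * ln (real T))) = sqrt 4 * sqrt (pi k * (ln (real T) / real T0))"
        unfolding e by (rule real_sqrt_mult)
      then show ?thesis unfolding t_def s4 by simp
    qed
    have t2: "t \<le> pi k / 2 + 8 * (ln (real T) / real T0)"
      unfolding t1 using pk lnT_pos T0_pos by (intro amgm4) auto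
    have d1: "ln (real T) / real T0 \<le> ln (real T) / sqrt (real T)"
      by (rule divide_left_mono) (use lnT_pos T0_ge sqrtT_pos T0_pos in auto)
    have d2: "ln (real T) / sqrt (real T) \<ge> 0" using lnT_pos sqrtT_pos by simp
    have d3: "12 * ln (real T) / sqrt (real T) = 12 * (ln (real T) / sqrt (real T))" by simp
    have b1: "2 * (p0 \<phi>' k + 12 * ln (real T) / sqrt (real T)) < pi k" using bad by simp
    have b2: "2 * (p0 \<phi>' k + 12 * ln (real T) / sqrt (real T)) = 2 * p0 \<phi>' k + 24 * (ln (real T) / sqrt (real T))"
      by simp
    have c: "t \<le> pi k / 2 + 8 * (ln (real T) / sqrt (real T))" using t2 d1 by linarith
    have "t \<le> pi k - p0 \<phi>' k" using b1 b2 c d2 by linarith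
    then show ?thesis using S by simp
  qed
  have "(\<Sum>\<phi>'\<in>PiE {1..T0} (\<lambda>_. {0..J}). if \<not> (pi k \<le> 2 * (p0 \<phi>' k + 12 * ln (real T) / sqrt (real T)))
            then (\<Prod>s\<in>{1..T0}. pi (\<phi>' s)) else 0)
     \<le> (\<Sum>\<phi>'\<in>PiE {1..T0} (\<lambda>_. {0..J}). if t \<le> (\<Sum>s\<in>{1..T0}. (\<Sum>l\<in>{0..J}. pi l * w s l) - w s (\<phi>' s))
            then (\<Prod>s\<in>{1..T0}. pi (\<phi>' s)) else 0)"
    using key pi_nonneg by (intro sum_mono) (auto intro!: prod_nonneg)
  then show ?thesis using ch by linarith
qed

end

context main begin

lemma j_le: assumes "j \<le> J" shows "real j \<le> sqrt 2 * sqrt (real T)"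
proof -
  have "real j ^ 2 \<le> real J ^ 2" using assms by (intro power_mono) auto
  also have "\<dots> \<le> 2 * real T" by (rule J_sq)
  also have "\<dots> = (sqrt 2 * sqrt (real T))\<^sup>2" by (simp add: power_mult_distrib)
  finally show ?thesis by (rule power2_le_imp_le) auto
qed

lemma DET:
  assumes mp: "mono_pat P"
    and G1: "\<forall>j\<in>{1..J}. nP P j \<ge> 1 \<longrightarrow> \<not> (tt P j \<le> 1 * (Gh P \<phi> j - cdf D (bgrid T j)))
                                      \<and> \<not> (tt P j \<le> -1 * (Gh P \<phi> j - cdf D (bgrid T j)))"
    and G2: "\<forall>k\<in>{1..J}. pi k \<le> 2 * (p0 \<phi>' k + 12 * ln (real T) / sqrt (real T))"
  shows "Rtot P \<phi> \<phi>'"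
  unfolding Rtot_def
proof
  fix j assume j: "j \<in> {1..J}"
  let ?L = "ln (real T)"
  define q where "q k = p0 \<phi>' k + 12 * ?L / sqrt (real T)" for k
  define S where "S i = (\<Sum>k=1..i. 2 * ?L / real (nP P k) * q k)" for i
  define e where "e i = cdf D (bgrid T i) - Gh P \<phi> i" for i
  show "ereal \<bar>cdf D (bgrid T j) - Gh P \<phi> j\<bar> \<le> ub P \<phi>' j \<and>
        ereal (1 / sqrt (real T) * \<bar>\<Sum>i = 1..j. cdf D (bgrid T i) - Gh P \<phi> i\<bar>) \<le> ub P \<phi>' j"
  proof (cases "\<exists>k\<in>{1..j}. nP P k = 0")
    case True then show ?thesis by (simp add: ub_def)
  next
    case False
    then have nk: "nP P k \<ge> 1" if "k \<in> {1..j}" for k using that by force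
    have nj: "nP P j \<ge> 1" using nk j by auto
    have ubj: "ub P \<phi>' j = ereal (8 * sqrt (S j) + 8 * ?L / real (nP P j))"
      using False unfolding ub_def S_def q_def by simp
    have L0: "?L > 0" by (rule lnT_pos)
    have q0: "q k \<ge> 0" for k unfolding q_def using p0_nonneg[of \<phi>' k] L0 sqrtT_pos by simp
    define c where "c = sqrt (2::real)"
    have c0: "c \<ge> 0" and cc: "c * c = 2" unfolding c_def by auto
    have c32: "c \<le> 3/2"
    proof -
      have "c\<^sup>2 \<le> (3/2)\<^sup>2" using cc by (simp add: power2_eq_square)
      then show ?thesis by (rule power2_le_imp_le) auto
    qed
    have s8: "sqrt 8 = 2 * c"
    proof -
      have "sqrt (8::real) = sqrt (4 * 2)" by simp
      also have "\<dots> = sqrt 4 * sqrt 2" by (rule real_sqrt_mult)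
      also have "sqrt (4::real) = 2" by (rule real_sqrt_unique) auto
      finally show ?thesis by (simp add: c_def)
    qed
    define r where "r i = 4 * c * sqrt (S i) + 16 / 3 * ?L / real (nP P i)" for i
    have bnd: "\<bar>e i\<bar> \<le> r i" if i: "i \<in> {1..j}" for i
    proof -
      have iJ: "i \<in> {1..J}" using i j by auto
      have ni: "nP P i \<ge> 1" using nk i by auto
      have "\<not> (tt P i \<le> 1 * (Gh P \<phi> i - cdf D (bgrid T i))) \<and> \<not> (tt P i \<le> -1 * (Gh P \<phi> i - cdf D (bgrid T i)))"
        using G1 iJ ni by auto
      then have ei: "\<bar>e i\<bar> \<le> tt P i" unfolding e_def by auto
      have "Vv P i * (8 * ?L) \<le> 8 * S i"
      proof -
        have "Vv P i * (8 * ?L) = (\<Sum>k=1..i. pi k / real (nP P k) * (8 * ?L))"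
          unfolding Vv_def by (simp add: sum_distrib_right)
        also have "\<dots> \<le> (\<Sum>k=1..i. 8 * (2 * ?L / real (nP P k) * q k))"
        proof (rule sum_mono)
          fix k assume k: "k \<in> {1..i}"
          then have kJ: "k \<in> {1..J}" using iJ by auto
          have "pi k \<le> 2 * q k" using G2 kJ unfolding q_def by auto
          then have "pi k * (8 * ?L) \<le> 2 * q k * (8 * ?L)" using L0 by (intro mult_right_mono) auto
          then show "pi k / real (nP P k) * (8 * ?L) \<le> 8 * (2 * ?L / real (nP P k) * q k)"
            by (simp add: divide_right_mono field_simps)
        qed
        also have "\<dots> = 8 * S i" unfolding S_def by (simp add: sum_distrib_left)
        finally show ?thesis .
      qed
      then have "sqrt (Vv P i * (8 * ?L)) \<le> sqrt (8 * S i)" by simp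
      also have "sqrt (8 * S i) = 2 * c * sqrt (S i)" by (simp add: real_sqrt_mult s8)
      finally have "tt P i \<le> 2 * (2 * c * sqrt (S i)) + 2 * (1 / real (nP P i)) * (8 * ?L) / 3"
        unfolding tt_def by linarith
      also have "\<dots> = r i" unfolding r_def by (simp add: field_simps)
      finally show ?thesis using ei by linarith
    qed
    have rmono: "r i \<le> r j" if i: "i \<in> {1..j}" for i
    proof -
      have "S i \<le> S j" unfolding S_def using i L0 q0
        by (intro sum_mono2) (auto intro!: mult_nonneg_nonneg divide_nonneg_nonneg)
      then have "4 * c * sqrt (S i) \<le> 4 * c * sqrt (S j)" using c0 by (intro mult_left_mono) auto
      moreover have "16 / 3 * ?L / real (nP P i) \<le> 16 / 3 * ?L / real (nP P j)"
        using nP_anti[OF mp, of i j] i nj L0 by (intro divide_left_mono) auto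
      ultimately show ?thesis unfolding r_def by linarith
    qed
    have Sj0: "S j \<ge> 0" unfolding S_def using L0 q0 by (intro sum_nonneg) (auto intro!: mult_nonneg_nonneg)
    have rj0: "0 \<le> r j" using rmono bnd j by (meson abs_ge_zero atLeastAtMost_iff le_refl order_trans)
    have first: "r j \<le> 8 * sqrt (S j) + 8 * ?L / real (nP P j)"
    proof -
      have "4 * c * sqrt (S j) \<le> 8 * sqrt (S j)" using c32 Sj0 by (intro mult_right_mono) auto
      moreover have "16 / 3 * ?L / real (nP P j) \<le> 8 * ?L / real (nP P j)"
        using L0 nj by (intro divide_right_mono) auto
      ultimately show ?thesis unfolding r_def by linarith
    qed
    have second: "1 / sqrt (real T) * \<bar>\<Sum>i = 1..j. e i\<bar> \<le> 8 * sqrt (S j) + 8 * ?L / real (nP P j)"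
    proof -
      have "\<bar>\<Sum>i = 1..j. e i\<bar> \<le> (\<Sum>i = 1..j. \<bar>e i\<bar>)" by (rule sum_abs)
      also have "\<dots> \<le> (\<Sum>i = 1..j. r j)" using bnd rmono by (intro sum_mono) (meson order_trans)
      also have "\<dots> = real j * r j" by simp
      also have "\<dots> \<le> (c * sqrt (real T)) * r j" using j_le[of j] j rj0 by (intro mult_right_mono) (auto simp: c_def)
      finally have "1 / sqrt (real T) * \<bar>\<Sum>i = 1..j. e i\<bar> \<le> 1 / sqrt (real T) * ((c * sqrt (real T)) * r j)"
        using sqrtT_pos by (intro mult_left_mono) auto
      also have "\<dots> = c * r j" using sqrtT_pos by simp
      also have "c * r j = 4 * (c * c) * sqrt (S j) + c * (16 / 3) * ?L / real (nP P j)"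
        unfolding r_def by (simp add: algebra_simps)
      also have "\<dots> \<le> 8 * sqrt (S j) + 8 * ?L / real (nP P j)"
      proof -
        have "c * (16 / 3) * ?L / real (nP P j) \<le> 8 * ?L / real (nP P j)"
          using c32 L0 nj by (intro divide_right_mono mult_right_mono) auto
        then show ?thesis using cc by simp
      qed
      finally show ?thesis .
    qed
    show ?thesis unfolding ubj using bnd[of j] j first second by (auto simp: e_def)
  qed
qed

end

context main begin

lemma exp_bound_T: "3 * real J * exp (- (8 * ln (real T))) \<le> 1 / real T ^ 3"
proof -
  have Tp: "real T > 0" using T2 by simp
  have e: "exp (- (8 * ln (real T))) = 1 / real T ^ 8"
  proof -
    have "exp (8 * ln (real T)) = exp (ln (real T)) ^ 8"
      using exp_of_nat_mult[of 8 "ln (real T)"] by simp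
    also have "\<dots> = real T ^ 8" using Tp by simp
    finally show ?thesis by (simp add: exp_minus inverse_eq_divide)
  qed
  have a: "3 * real J \<le> real T ^ 5"
  proof -
    have "3 * real J \<le> 3 * real T" using J_le_T by simp
    also have "\<dots> \<le> real T ^ 4 * real T"
    proof -
      have "(2::real) ^ 4 \<le> real T ^ 4" using T2 by (intro power_mono) auto
      then have "3 \<le> real T ^ 4" by simp
      then show ?thesis using Tp by (intro mult_right_mono) auto
    qed
    also have "\<dots> = real T ^ 5" by (simp add: power_Suc2[symmetric] numeral_eq_Suc)
    finally show ?thesis .
  qed
  have eq8: "real T ^ 8 = real T ^ 5 * real T ^ 3" by (subst power_add[symmetric]) simp
  have "3 * real J * exp (- (8 * ln (real T))) = 3 * real J / real T ^ 8" unfolding e by simp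
  also have "\<dots> \<le> real T ^ 5 / real T ^ 8" by (rule divide_right_mono[OF a]) simp
  also have "\<dots> = 1 / real T ^ 3"
  proof -
    show ?thesis using Tp by (simp add: field_simps flip: power_add)
  qed
  finally show ?thesis .
qed

theorem main_result:
  "measure M {\<omega>\<in>space M. Rtot (pat (\<lambda>\<tau>. b \<tau> \<omega>)) (labm \<omega>) (labm' \<omega>)} \<ge> 1 - 1 / real T ^ 3"
proof -
  interpret M: prob_space M by (rule PM)
  define x where "x = 8 * ln (real T)"
  define QU where "QU j P \<phi> = (mono_pat P \<and> nP P j \<ge> 1 \<and> tt P j \<le> 1 * (Gh P \<phi> j - cdf D (bgrid T j)))" for j P \<phi>
  define QL where "QL j P \<phi> = (mono_pat P \<and> nP P j \<ge> 1 \<and> tt P j \<le> -1 * (Gh P \<phi> j - cdf D (bgrid T j)))" for j P \<phi>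
  define QB where "QB P \<phi> = (\<exists>j\<in>{1..J}. mono_pat P \<and> nP P j \<ge> 1 \<and>
      (tt P j \<le> 1 * (Gh P \<phi> j - cdf D (bgrid T j)) \<or> tt P j \<le> -1 * (Gh P \<phi> j - cdf D (bgrid T j))))" for P \<phi>
  define QK where "QK k \<phi>' = (\<not> (pi k \<le> 2 * (p0 \<phi>' k + 12 * ln (real T) / sqrt (real T))))" for k \<phi>'
  define QP where "QP \<phi>' = (\<exists>k\<in>{1..J}. QK k \<phi>')" for \<phi>'
  define Z where "Z = {\<omega>\<in>space M. Rtot (pat (\<lambda>\<tau>. b \<tau> \<omega>)) (labm \<omega>) (labm' \<omega>)}"
  define BU where "BU = {\<omega>\<in>space M. QB (pat (\<lambda>\<tau>. b \<tau> \<omega>)) (labm \<omega>)}"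
  define BP where "BP = {\<omega>\<in>space M. QP (labm' \<omega>)}"
  have Zs: "Z \<in> sets M" unfolding Z_def by (rule FIB)
  have BUs: "BU \<in> sets M" unfolding BU_def using FIB[of "\<lambda>P \<phi> \<phi>'. QB P \<phi>"] by simp
  have BPs: "BP \<in> sets M" unfolding BP_def using FIB[of "\<lambda>P \<phi> \<phi>'. QP \<phi>'"] by simp
  have pnn: "(\<Prod>\<tau>\<in>I. pi (\<phi> \<tau>)) \<ge> 0" for I \<phi> by (intro prod_nonneg) (auto intro: pi_nonneg)
  have finPhi: "finite (PiE \<Phi> (\<lambda>_. {0..J}))" using fin by (intro finite_PiE) auto
  have finT0: "finite (PiE {1..T0} (\<lambda>_. {0..J}))" by (intro finite_PiE) auto
  have mBU: "measure M BU \<le> real J * (2 * exp (- x))"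
    unfolding BU_def
  proof (rule pattern_bound)
    fix P assume P: "P \<in> PS"
    have "(\<Sum>\<phi>\<in>PiE \<Phi> (\<lambda>_. {0..J}). if QB P \<phi> then (\<Prod>\<tau>\<in>\<Phi>. pi (\<phi> \<tau>)) else 0)
       \<le> (\<Sum>j\<in>{1..J}. \<Sum>\<phi>\<in>PiE \<Phi> (\<lambda>_. {0..J}). if QU j P \<phi> \<or> QL j P \<phi> then (\<Prod>\<tau>\<in>\<Phi>. pi (\<phi> \<tau>)) else 0)"
    proof -
      have eqQB: "QB P \<phi> = (\<exists>j\<in>{1..J}. QU j P \<phi> \<or> QL j P \<phi>)" for \<phi>
        unfolding QB_def QU_def QL_def by blast
      show ?thesis unfolding eqQB by (rule sum_if_ex[OF finPhi finite_atLeastAtMost pnn])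
    qed
    also have "\<dots> \<le> (\<Sum>j\<in>{1..J}. 2 * exp (- x))"
    proof (rule sum_mono)
      fix j assume j: "j \<in> {1..J}"
      have "(\<Sum>\<phi>\<in>PiE \<Phi> (\<lambda>_. {0..J}). if QU j P \<phi> \<or> QL j P \<phi> then (\<Prod>\<tau>\<in>\<Phi>. pi (\<phi> \<tau>)) else 0)
         \<le> (\<Sum>\<phi>\<in>PiE \<Phi> (\<lambda>_. {0..J}). if QU j P \<phi> then (\<Prod>\<tau>\<in>\<Phi>. pi (\<phi> \<tau>)) else 0)
          + (\<Sum>\<phi>\<in>PiE \<Phi> (\<lambda>_. {0..J}). if QL j P \<phi> then (\<Prod>\<tau>\<in>\<Phi>. pi (\<phi> \<tau>)) else 0)"
        using finPhi pnn by (intro sum_if_or) auto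
      also have "\<dots> \<le> exp (- x) + exp (- x)"
        unfolding QU_def QL_def x_def using m_tail[OF j, of 1 P] m_tail[OF j, of "-1" P] by (intro add_mono) auto
      finally show "(\<Sum>\<phi>\<in>PiE \<Phi> (\<lambda>_. {0..J}). if QU j P \<phi> \<or> QL j P \<phi> then (\<Prod>\<tau>\<in>\<Phi>. pi (\<phi> \<tau>)) else 0) \<le> 2 * exp (- x)"
        by simp
    qed
    also have "\<dots> = real J * (2 * exp (- x))" by simp
    finally show "(\<Sum>\<phi>\<in>PiE \<Phi> (\<lambda>_. {0..J}). if QB P \<phi> then (\<Prod>\<tau>\<in>\<Phi>. pi (\<phi> \<tau>)) else 0) \<le> real J * (2 * exp (- x))" .
  qed simp
  have mBP: "measure M BP \<le> real J * exp (- x)"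
  proof -
    have "measure M BP = (\<Sum>\<phi>'\<in>PiE {1..T0} (\<lambda>_. {0..J}). if QP \<phi>' then (\<Prod>s\<in>{1..T0}. pi (\<phi>' s)) else 0)"
      unfolding BP_def by (rule mprime_bound)
    also have "\<dots> \<le> (\<Sum>k\<in>{1..J}. \<Sum>\<phi>'\<in>PiE {1..T0} (\<lambda>_. {0..J}). if QK k \<phi>' then (\<Prod>s\<in>{1..T0}. pi (\<phi>' s)) else 0)"
      unfolding QP_def using finT0 pnn by (intro sum_if_ex) auto
    also have "\<dots> \<le> (\<Sum>k\<in>{1..J}. exp (- x))"
      unfolding QK_def x_def using mp_tail by (intro sum_mono) auto
    finally show ?thesis by simp
  qed
  have sub: "space M - Z \<subseteq> BU \<union> BP"
  proof
    fix \<omega> assume \<omega>: "\<omega> \<in> space M - Z"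
    show "\<omega> \<in> BU \<union> BP"
    proof (rule ccontr)
      assume "\<omega> \<notin> BU \<union> BP"
      then have nU: "\<not> QB (pat (\<lambda>\<tau>. b \<tau> \<omega>)) (labm \<omega>)" and nP: "\<not> QP (labm' \<omega>)"
        using \<omega> unfolding BU_def BP_def by auto
      have "Rtot (pat (\<lambda>\<tau>. b \<tau> \<omega>)) (labm \<omega>) (labm' \<omega>)"
      proof (rule DET[OF pat_mono])
        show "\<forall>j\<in>{1..J}. nP (pat (\<lambda>\<tau>. b \<tau> \<omega>)) j \<ge> 1 \<longrightarrow>
            \<not> (tt (pat (\<lambda>\<tau>. b \<tau> \<omega>)) j \<le> 1 * (Gh (pat (\<lambda>\<tau>. b \<tau> \<omega>)) (labm \<omega>) j - cdf D (bgrid T j)))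
          \<and> \<not> (tt (pat (\<lambda>\<tau>. b \<tau> \<omega>)) j \<le> -1 * (Gh (pat (\<lambda>\<tau>. b \<tau> \<omega>)) (labm \<omega>) j - cdf D (bgrid T j)))"
        proof (intro ballI impI conjI notI)
          fix j assume j: "j \<in> {1..J}" and n: "nP (pat (\<lambda>\<tau>. b \<tau> \<omega>)) j \<ge> 1"
          {
            assume h: "tt (pat (\<lambda>\<tau>. b \<tau> \<omega>)) j \<le> 1 * (Gh (pat (\<lambda>\<tau>. b \<tau> \<omega>)) (labm \<omega>) j - cdf D (bgrid T j))"
            have "QB (pat (\<lambda>\<tau>. b \<tau> \<omega>)) (labm \<omega>)" unfolding QB_def
              by (rule bexI[OF _ j]) (use n pat_mono h in blast)
            then show False using nU by contradiction
          }
          {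
            assume h: "tt (pat (\<lambda>\<tau>. b \<tau> \<omega>)) j \<le> -1 * (Gh (pat (\<lambda>\<tau>. b \<tau> \<omega>)) (labm \<omega>) j - cdf D (bgrid T j))"
            have "QB (pat (\<lambda>\<tau>. b \<tau> \<omega>)) (labm \<omega>)" unfolding QB_def
              by (rule bexI[OF _ j]) (use n pat_mono h in blast)
            then show False using nU by contradiction
          }
        qed
        show "\<forall>k\<in>{1..J}. pi k \<le> 2 * (p0 (labm' \<omega>) k + 12 * ln (real T) / sqrt (real T))"
          using nP unfolding QP_def QK_def by blast
      qed
      then show False using \<omega> unfolding Z_def by auto
    qed
  qed
  have "measure M (space M - Z) \<le> measure M (BU \<union> BP)"
    using sub BUs BPs by (intro M.finite_measure_mono) auto
  also have "\<dots> \<le> measure M BU + measure M BP" using BUs BPs by (rule measure_Un_le)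
  also have "\<dots> \<le> 3 * real J * exp (- x)" using mBU mBP by simp
  also have "\<dots> \<le> 1 / real T ^ 3" unfolding x_def by (rule exp_bound_T)
  finally have "measure M (space M - Z) \<le> 1 / real T ^ 3" .
  moreover have "measure M (space M - Z) = 1 - measure M Z" using M.prob_compl[OF Zs] .
  ultimately show ?thesis unfolding Z_def by simp
qed

end

theorem lemma1:
  fixes M :: "'a measure" and D :: "real measure"
    and T T0 :: nat and \<Phi> :: "'i set"
    and b m :: "'i \<Rightarrow> 'a \<Rightarrow> real" and m' :: "nat \<Rightarrow> 'a \<Rightarrow> real"
  assumes "prob_space M"
    and "T \<ge> 2"
    and "prob_space D" and "sets D = sets borel" and "emeasure D {0..1} = 1"
    and "finite \<Phi>"
    and "T0 \<ge> nat \<lceil>sqrt (real T)\<rceil>"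
    and "\<And>\<tau>. \<tau> \<in> \<Phi> \<Longrightarrow> b \<tau> \<in> borel_measurable M"
    and "\<And>\<tau>. \<tau> \<in> \<Phi> \<Longrightarrow> m \<tau> \<in> borel_measurable M"
    and "\<And>s. s \<in> {1..T0} \<Longrightarrow> m' s \<in> borel_measurable M"
    and "\<And>\<tau> \<omega>. \<tau> \<in> \<Phi> \<Longrightarrow> \<omega> \<in> space M \<Longrightarrow> b \<tau> \<omega> \<in> {0..1}"
    and indep: "\<And>B A A'. B \<in> sets (PiM \<Phi> (\<lambda>_. borel)) \<Longrightarrow>
        (\<forall>\<tau>\<in>\<Phi>. A \<tau> \<in> sets borel) \<Longrightarrow> (\<forall>s\<in>{1..T0}. A' s \<in> sets borel) \<Longrightarrow>
        measure M {\<omega> \<in> space M. (\<lambda>\<tau>\<in>\<Phi>. b \<tau> \<omega>) \<in> B \<and> (\<forall>\<tau>\<in>\<Phi>. m \<tau> \<omega> \<in> A \<tau>)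
                                  \<and> (\<forall>s\<in>{1..T0}. m' s \<omega> \<in> A' s)}
        = measure M {\<omega> \<in> space M. (\<lambda>\<tau>\<in>\<Phi>. b \<tau> \<omega>) \<in> B}
          * (\<Prod>\<tau>\<in>\<Phi>. measure D (A \<tau>)) * (\<Prod>s\<in>{1..T0}. measure D (A' s))"
  shows "measure M {\<omega> \<in> space M. \<forall>j\<in>{1..Jnum T}.
            ereal \<bar>cdf D (bgrid T j) - Ghat T \<Phi> (\<lambda>\<tau>. b \<tau> \<omega>) (\<lambda>\<tau>. m \<tau> \<omega>) j\<bar>
              \<le> ubound T T0 \<Phi> (\<lambda>\<tau>. b \<tau> \<omega>) (\<lambda>s. m' s \<omega>) j
          \<and> ereal ((1 / sqrt (real T)) * \<bar>\<Sum>i=1..j. cdf D (bgrid T i) - Ghat T \<Phi> (\<lambda>\<tau>. b \<tau> \<omega>) (\<lambda>\<tau>. m \<tau> \<omega>) i\<bar>)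
              \<le> ubound T T0 \<Phi> (\<lambda>\<tau>. b \<tau> \<omega>) (\<lambda>s. m' s \<omega>) j}
         \<ge> 1 - 1 / real T ^ 3"
proof -
  have rd: "real_distribution D" using assms(3,4)
    by (simp add: real_distribution_def real_distribution_axioms_def)
  interpret main T D M T0 \<Phi> b m m'
  proof (rule main.intro)
    show "setting T D" by (rule setting.intro) (use assms(2,5) rd in auto)
    show "main_axioms T D M T0 \<Phi> b m m'"
    proof (rule main_axioms.intro)
      show "\<And>B A A'. B \<in> sets (PiM \<Phi> (\<lambda>_. borel)) \<Longrightarrow>
        (\<forall>\<tau>\<in>\<Phi>. A \<tau> \<in> sets borel) \<Longrightarrow> (\<forall>s\<in>{1..T0}. A' s \<in> sets borel) \<Longrightarrow>
        measure M {\<omega> \<in> space M. (\<lambda>\<tau>\<in>\<Phi>. b \<tau> \<omega>) \<in> B \<and> (\<forall>\<tau>\<in>\<Phi>. m \<tau> \<omega> \<in> A \<tau>)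
                                  \<and> (\<forall>s\<in>{1..T0}. m' s \<omega> \<in> A' s)}
        = measure M {\<omega> \<in> space M. (\<lambda>\<tau>\<in>\<Phi>. b \<tau> \<omega>) \<in> B}
          * (\<Prod>\<tau>\<in>\<Phi>. measure D (A \<tau>)) * (\<Prod>s\<in>{1..T0}. measure D (A' s))"
        by (rule indep)
    qed (use assms in blast)+
  qed
  have eq: "{\<omega> \<in> space M. \<forall>j\<in>{1..Jnum T}.
            ereal \<bar>cdf D (bgrid T j) - Ghat T \<Phi> (\<lambda>\<tau>. b \<tau> \<omega>) (\<lambda>\<tau>. m \<tau> \<omega>) j\<bar>
              \<le> ubound T T0 \<Phi> (\<lambda>\<tau>. b \<tau> \<omega>) (\<lambda>s. m' s \<omega>) j
          \<and> ereal ((1 / sqrt (real T)) * \<bar>\<Sum>i=1..j. cdf D (bgrid T i) - Ghat T \<Phi> (\<lambda>\<tau>. b \<tau> \<omega>) (\<lambda>\<tau>. m \<tau> \<omega>) i\<bar>)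
              \<le> ubound T T0 \<Phi> (\<lambda>\<tau>. b \<tau> \<omega>) (\<lambda>s. m' s \<omega>) j}
     = {\<omega>\<in>space M. Rtot (pat (\<lambda>\<tau>. b \<tau> \<omega>)) (labm \<omega>) (labm' \<omega>)}"
    unfolding labm_def labm'_def
  proof (intro Collect_cong conj_cong refl)
    fix \<omega>
    show "(\<forall>j\<in>{1..Jnum T}.
            ereal \<bar>cdf D (bgrid T j) - Ghat T \<Phi> (\<lambda>\<tau>. b \<tau> \<omega>) (\<lambda>\<tau>. m \<tau> \<omega>) j\<bar>
              \<le> ubound T T0 \<Phi> (\<lambda>\<tau>. b \<tau> \<omega>) (\<lambda>s. m' s \<omega>) j
          \<and> ereal ((1 / sqrt (real T)) * \<bar>\<Sum>i=1..j. cdf D (bgrid T i) - Ghat T \<Phi> (\<lambda>\<tau>. b \<tau> \<omega>) (\<lambda>\<tau>. m \<tau> \<omega>) i\<bar>)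
              \<le> ubound T T0 \<Phi> (\<lambda>\<tau>. b \<tau> \<omega>) (\<lambda>s. m' s \<omega>) j)
      = Rtot (pat (\<lambda>\<tau>. b \<tau> \<omega>)) (\<lambda>\<tau>\<in>\<Phi>. lab (m \<tau> \<omega>)) (\<lambda>s\<in>{1..T0}. lab (m' s \<omega>))"
      by (rule target_eq)
  qed
  show ?thesis unfolding eq by (rule main_result)
qed

end
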